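(* Let $E$ be a graph, $S\subseteq R(E)$ and $K$ a field with involution. Define the graph $E_S$ by $E_S^0=E^0\cup\{v':v\in R(E)\setminus S\}$ and $E_S^1=E^1\cup\{e':e\in E^1,\ \mathbf{r}(e)\in R(E)\setminus S\}$ (new symbols $v'$, $e'$), where $\mathbf{s},\mathbf{r}$ agree with those of $E$ on $E^1$, and $\mathbf{s}(e')=\mathbf{s}(e)$, $\mathbf{r}(e')=\mathbf{r}(e)'$. Define $\phi$ on vertices of $E_S$ by $\phi(v)=v$ if $v\notin R(E)\setminus S$, $\phi(v)=\sum_{e\in\mathbf{s}^{-1}(v)}ee^*$ if $v\in R(E)\setminus S$, and $\phi(v')=v-\sum_{e\in\mathbf{s}^{-1}(v)}ee^*$ for $v\in R(E)\setminus S$; on edges by $\phi(e)=e\,\phi(\mathbf{r}(e))$ for $e\in E^1$ and $\phi(e')=e\,\phi(\mathbf{r}(e)')$; and on ghost edges by $\phi(f^* )=\phi(f)^*$ for $f\in E_S^1$ (all values in $CL_K(E,S)$). Then $\phi$ extends uniquely to a $K$-algebra $*$-isomorphism $\phi:L_K(E_S)\to CL_K(E,S)$.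
   Context: A (directed) graph $E=(E^0,E^1,\mathbf{s},\mathbf{r})$ has vertex set $E^0$, edge set $E^1$, source and range maps; no finiteness or countability is assumed. Paths are vertices or sequences $e_1\cdots e_n$ of edges with $\mathbf{r}(e_i)=\mathbf{s}(e_{i+1})$. A vertex $v$ is regular if $\mathbf{s}^{-1}(v)$ is nonempty and finite; $R(E)$ is the set of regular vertices. $K$ has an arbitrary involution $a\mapsto a^*$. For $S\subseteq R(E)$, $CL_K(E,S)$ is the free $K$-algebra generated by $E^0\cup E^1\cup\{e^*:e\in E^1\}$ subject to (V) $vw=\delta_{v,w}v$; (E1) $\mathbf{s}(e)e=e\mathbf{r}(e)=e$; (E2) $\mathbf{r}(e)e^*=e^*\mathbf{s}(e)=e^*$; (CK1) $e^*f=\delta_{e,f}\mathbf{r}(e)$; (SCK2) $v=\sum_{e\in\mathbf{s}^{-1}(v)}ee^*$ for $v\in S$; and $L_K(F)=CL_K(F,R(F))$ for any graph $F$. These are involutive $K$-algebras via $(\sum a_ip_iq_i^* )^*=\sum a_i^*q_ip_i^*$, where $p^*=e_n^*\cdots e_1^*$, $v^*=v$. A $*$-isomorphism is an algebra isomorphism $f$ with $f(x^* )=f(x)^*$. *)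

theory Defs
  imports Main
begin

record ('v,'e) graph =
  verts :: "'v set"
  edges :: "'e set"
  src   :: "'e \<Rightarrow> 'v"
  rng   :: "'e \<Rightarrow> 'v"

definition wf_graph :: "('v,'e) graph \<Rightarrow> bool" where
  "wf_graph G \<longleftrightarrow> (\<forall>e\<in>edges G. src G e \<in> verts G \<and> rng G e \<in> verts G)"

definition out_edges :: "('v,'e) graph \<Rightarrow> 'v \<Rightarrow> 'e set" where
  "out_edges G v = {e \<in> edges G. src G e = v}"

definition regular :: "('v,'e) graph \<Rightarrow> 'v set" where
  "regular G = {v \<in> verts G. out_edges G v \<noteq> {} \<and> finite (out_edges G v)}"

text \<open>Generators: vertices, edges and ghost edges.\<close>
datatype ('v,'e) gen = GV 'v | GE 'e | GG 'e

fun gstar :: "('v,'e) gen \<Rightarrow> ('v,'e) gen" where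
  "gstar (GV v) = GV v"
| "gstar (GE e) = GG e"
| "gstar (GG e) = GE e"

definition gens :: "('v,'e) graph \<Rightarrow> ('v,'e) gen set" where
  "gens G = GV ` verts G \<union> GE ` edges G \<union> GG ` edges G"

text \<open>Elements of the free non-unital K-algebra on generators X: finitely supported
  coefficient functions on nonempty words in X.\<close>
type_synonym ('g,'k) fa = "'g list \<Rightarrow> 'k"

definition fa_carrier :: "'g set \<Rightarrow> ('g,'k::zero) fa set" where
  "fa_carrier X = {p. finite {w. p w \<noteq> 0} \<and> (\<forall>w. p w \<noteq> 0 \<longrightarrow> w \<noteq> [] \<and> set w \<subseteq> X)}"

definition fa_zero :: "('g,'k::zero) fa" where
  "fa_zero = (\<lambda>w. 0)"

definition fa_add :: "('g,'k::plus) fa \<Rightarrow> ('g,'k) fa \<Rightarrow> ('g,'k) fa" where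
  "fa_add p q = (\<lambda>w. p w + q w)"

definition fa_diff :: "('g,'k::minus) fa \<Rightarrow> ('g,'k) fa \<Rightarrow> ('g,'k) fa" where
  "fa_diff p q = (\<lambda>w. p w - q w)"

definition fa_smul :: "'k::times \<Rightarrow> ('g,'k) fa \<Rightarrow> ('g,'k) fa" where
  "fa_smul a p = (\<lambda>w. a * p w)"

definition fa_sum :: "'i set \<Rightarrow> ('i \<Rightarrow> ('g,'k::comm_monoid_add) fa) \<Rightarrow> ('g,'k) fa" where
  "fa_sum A f = (\<lambda>w. \<Sum>i\<in>A. f i w)"

definition fa_mult :: "('g,'k::comm_semiring_0) fa \<Rightarrow> ('g,'k) fa \<Rightarrow> ('g,'k) fa" where
  "fa_mult p q = (\<lambda>w. \<Sum>i\<le>length w. p (take i w) * q (drop i w))"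

definition fa_gen :: "'g \<Rightarrow> ('g,'k::{zero,one}) fa" where
  "fa_gen x = (\<lambda>w. if w = [x] then 1 else 0)"

fun fa_listprod :: "('g,'k::comm_semiring_0) fa list \<Rightarrow> ('g,'k) fa" where
  "fa_listprod [] = fa_zero"
| "fa_listprod [p] = p"
| "fa_listprod (p # ps) = fa_mult p (fa_listprod ps)"

text \<open>The unique algebra homomorphism of free algebras extending a map on generators.\<close>
definition fa_eval :: "('g \<Rightarrow> ('h,'k::comm_semiring_0) fa) \<Rightarrow> ('g,'k) fa \<Rightarrow> ('h,'k) fa" where
  "fa_eval f p = (\<lambda>w. \<Sum>u\<in>{u. p u \<noteq> 0}. p u * fa_listprod (map f u) w)"

definition fa_star :: "('k \<Rightarrow> 'k) \<Rightarrow> (('v,'e) gen,'k) fa \<Rightarrow> (('v,'e) gen,'k) fa" where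
  "fa_star cnj p = (\<lambda>w. cnj (p (rev (map gstar w))))"

inductive_set fa_ideal :: "'g set \<Rightarrow> ('g,'k::field) fa set \<Rightarrow> ('g,'k) fa set"
  for X :: "'g set" and R :: "('g,'k) fa set" where
  base: "r \<in> R \<Longrightarrow> r \<in> fa_ideal X R"
| zero: "fa_zero \<in> fa_ideal X R"
| add: "p \<in> fa_ideal X R \<Longrightarrow> q \<in> fa_ideal X R \<Longrightarrow> fa_add p q \<in> fa_ideal X R"
| smul: "p \<in> fa_ideal X R \<Longrightarrow> fa_smul a p \<in> fa_ideal X R"
| lmult: "p \<in> fa_ideal X R \<Longrightarrow> a \<in> fa_carrier X \<Longrightarrow> fa_mult a p \<in> fa_ideal X R"
| rmult: "p \<in> fa_ideal X R \<Longrightarrow> a \<in> fa_carrier X \<Longrightarrow> fa_mult p a \<in> fa_ideal X R"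

definition ghat :: "'g \<Rightarrow> ('g,'k::field) fa" where
  "ghat x = fa_gen x"

text \<open>The defining relations, written as elements lhs - rhs.\<close>
definition CL_rels :: "('v,'e) graph \<Rightarrow> 'v set \<Rightarrow> (('v,'e) gen,'k::field) fa set" where
  "CL_rels G S =
     {fa_diff (fa_mult (ghat (GV v)) (ghat (GV w))) (if v = w then ghat (GV v) else fa_zero)
        | v w. v \<in> verts G \<and> w \<in> verts G}
   \<union> {fa_diff (fa_mult (ghat (GV (src G e))) (ghat (GE e))) (ghat (GE e)) | e. e \<in> edges G}
   \<union> {fa_diff (fa_mult (ghat (GE e)) (ghat (GV (rng G e)))) (ghat (GE e)) | e. e \<in> edges G}
   \<union> {fa_diff (fa_mult (ghat (GV (rng G e))) (ghat (GG e))) (ghat (GG e)) | e. e \<in> edges G}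
   \<union> {fa_diff (fa_mult (ghat (GG e)) (ghat (GV (src G e)))) (ghat (GG e)) | e. e \<in> edges G}
   \<union> {fa_diff (fa_mult (ghat (GG e)) (ghat (GE f))) (if e = f then ghat (GV (rng G e)) else fa_zero)
        | e f. e \<in> edges G \<and> f \<in> edges G}
   \<union> {fa_diff (ghat (GV v)) (fa_sum (out_edges G v) (\<lambda>e. fa_mult (ghat (GE e)) (ghat (GG e))))
        | v. v \<in> S}"

text \<open>CL_K(G,S) is fa_carrier (gens G) modulo CL_ideal G S; L_K(G) = CL_K(G,R(G)).\<close>
definition CL_ideal :: "('v,'e) graph \<Rightarrow> 'v set \<Rightarrow> (('v,'e) gen,'k::field) fa set" where
  "CL_ideal G S = fa_ideal (gens G) (CL_rels G S)"

definition L_ideal :: "('v,'e) graph \<Rightarrow> (('v,'e) gen,'k::field) fa set" where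
  "L_ideal G = CL_ideal G (regular G)"

text \<open>A K-algebra homomorphism between quotients fa_carrier X1 / I1 -> fa_carrier X2 / I2,
  represented by a map on representatives.\<close>
definition hom_mod :: "'g set \<Rightarrow> ('g,'k::field) fa set \<Rightarrow> 'h set \<Rightarrow> ('h,'k) fa set
    \<Rightarrow> (('g,'k) fa \<Rightarrow> ('h,'k) fa) \<Rightarrow> bool" where
  "hom_mod X1 I1 X2 I2 \<Psi> \<longleftrightarrow>
     (\<forall>p\<in>fa_carrier X1. \<Psi> p \<in> fa_carrier X2)
   \<and> (\<forall>p\<in>fa_carrier X1. \<forall>q\<in>fa_carrier X1. fa_diff p q \<in> I1 \<longrightarrow> fa_diff (\<Psi> p) (\<Psi> q) \<in> I2)
   \<and> (\<forall>p\<in>fa_carrier X1. \<forall>q\<in>fa_carrier X1. fa_diff (\<Psi> (fa_add p q)) (fa_add (\<Psi> p) (\<Psi> q)) \<in> I2)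
   \<and> (\<forall>a. \<forall>p\<in>fa_carrier X1. fa_diff (\<Psi> (fa_smul a p)) (fa_smul a (\<Psi> p)) \<in> I2)
   \<and> (\<forall>p\<in>fa_carrier X1. \<forall>q\<in>fa_carrier X1. fa_diff (\<Psi> (fa_mult p q)) (fa_mult (\<Psi> p) (\<Psi> q)) \<in> I2)"

text \<open>Inl = old vertices/edges, Inr v = v', Inr e = e'.\<close>
definition ES_graph :: "('v,'e) graph \<Rightarrow> 'v set \<Rightarrow> ('v + 'v, 'e + 'e) graph" where
  "ES_graph E S =
    \<lparr> verts = Inl ` verts E \<union> Inr ` (regular E - S),
      edges = Inl ` edges E \<union> Inr ` {e \<in> edges E. rng E e \<in> regular E - S},
      src = (\<lambda>x. case x of Inl e \<Rightarrow> Inl (src E e) | Inr e \<Rightarrow> Inl (src E e)),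
      rng = (\<lambda>x. case x of Inl e \<Rightarrow> Inl (rng E e) | Inr e \<Rightarrow> Inr (rng E e)) \<rparr>"

definition Psum :: "('v,'e) graph \<Rightarrow> 'v \<Rightarrow> (('v,'e) gen,'k::field) fa" where
  "Psum E v = fa_sum (out_edges E v) (\<lambda>e. fa_mult (ghat (GE e)) (ghat (GG e)))"

definition phi_vert :: "('v,'e) graph \<Rightarrow> 'v set \<Rightarrow> 'v + 'v \<Rightarrow> (('v,'e) gen,'k::field) fa" where
  "phi_vert E S x = (case x of
      Inl v \<Rightarrow> (if v \<in> regular E - S then Psum E v else ghat (GV v))
    | Inr v \<Rightarrow> fa_diff (ghat (GV v)) (Psum E v))"

definition phi_edge :: "('v,'e) graph \<Rightarrow> 'v set \<Rightarrow> 'e + 'e \<Rightarrow> (('v,'e) gen,'k::field) fa" where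
  "phi_edge E S x = (case x of
      Inl e \<Rightarrow> fa_mult (ghat (GE e)) (phi_vert E S (Inl (rng E e)))
    | Inr e \<Rightarrow> fa_mult (ghat (GE e)) (phi_vert E S (Inr (rng E e))))"

definition phi_gen :: "('k \<Rightarrow> 'k) \<Rightarrow> ('v,'e) graph \<Rightarrow> 'v set \<Rightarrow> ('v + 'v, 'e + 'e) gen
    \<Rightarrow> (('v,'e) gen,'k::field) fa" where
  "phi_gen cnj E S g = (case g of
      GV x \<Rightarrow> phi_vert E S x
    | GE f \<Rightarrow> phi_edge E S f
    | GG f \<Rightarrow> fa_star cnj (phi_edge E S f))"

end

theory Submission
  imports Defs "HOL-Library.Poly_Mapping"
begin


instantiation list :: (type) monoid_add
begin
definition zero_list_def: "0 = []"
definition plus_list_def: "(+) = (@)"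
instance by standard (simp_all add: zero_list_def plus_list_def)
end

abbreviation lk where "lk \<equiv> Poly_Mapping.lookup"
abbreviation ks where "ks \<equiv> Poly_Mapping.keys"
abbreviation sg where "sg \<equiv> Poly_Mapping.single"

lemma plus_list_eq[simp]: "(xs::'a list) + ys = xs @ ys" by (simp add: plus_list_def)
lemma zero_list_eq[simp]: "(0::'a list) = []" by (simp add: zero_list_def)
lemma sg_nil_one[simp]: "sg [] (1::'k::field) = 1" using single_one[where 'a="'g list", where 'b='k] by simp

type_synonym ('g,'k) rg = "'g list \<Rightarrow>\<^sub>0 'k"

lemma lookup_mult_list:
  fixes x y :: "'g list \<Rightarrow>\<^sub>0 'k::field"
  shows "lk (x * y) w = (\<Sum>i\<le>length w. lk x (take i w) * lk y (drop i w))"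
proof -
  have "lk (x * y) w = prod_fun (lk x) (lk y) w"
    by (simp add: times_poly_mapping.rep_eq)
  also have "\<dots> = (\<Sum>(a, b). lk x a * lk y b when w = a + b)"
    by (rule prod_fun_unfold_prod) auto
  also have "\<dots> = (\<Sum>ab\<in>(\<lambda>i. (take i w, drop i w)) ` {..length w}.
        (case ab of (a,b) \<Rightarrow> lk x a * lk y b when w = a + b))"
  proof (rule Sum_any.expand_superset)
    show "finite ((\<lambda>i. (take i w, drop i w)) ` {..length w})" by simp
    show "{ab. (case ab of (a,b) \<Rightarrow> lk x a * lk y b when w = a + b) \<noteq> 0}
        \<subseteq> (\<lambda>i. (take i w, drop i w)) ` {..length w}"
    proof clarify
      fix a b assume "(lk x a * lk y b when w = a + b) \<noteq> 0"
      then have "w = a @ b" by (simp add: plus_list_def when_def split: if_splits)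
      then show "(a, b) \<in> (\<lambda>i. (take i w, drop i w)) ` {..length w}"
        by (intro image_eqI[of _ _ "length a"]) auto
    qed
  qed
  also have "\<dots> = (\<Sum>i\<le>length w. lk x (take i w) * lk y (drop i w))"
  proof (subst sum.reindex)
    show "inj_on (\<lambda>i. (take i w, drop i w)) {..length w}"
      by (rule inj_onI) (metis atMost_iff length_take min.absorb2 prod.inject)
  qed (simp add: plus_list_def)
  finally show ?thesis .
qed


definition sc :: "'k \<Rightarrow> ('g,'k::field) rg" where "sc a = sg [] a"

lemma lk_sc_mult: "lk (sc a * x) w = a * lk x w"
proof -
  have "lk (sc a * x) w = (\<Sum>i\<le>length w. lk (sc a) (take i w) * lk x (drop i w))"
    by (rule lookup_mult_list)
  also have "\<dots> = lk (sc a) (take 0 w) * lk x (drop 0 w) + (\<Sum>i<length w. lk (sc a) (take (Suc i) w) * lk x (drop (Suc i) w))"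
    by (rule sum.atMost_shift)
  also have "(\<Sum>i<length w. lk (sc a) (take (Suc i) w) * lk x (drop (Suc i) w)) = 0"
    by (rule sum.neutral) (auto simp: sc_def lookup_single when_def)
  finally show ?thesis by (simp add: sc_def lookup_single)
qed

lemma lk_mult_sc: "lk (x * sc a) w = lk x w * a"
proof -
  have "lk (x * sc a) w = (\<Sum>i\<le>length w. lk x (take i w) * lk (sc a) (drop i w))"
    by (rule lookup_mult_list)
  also have "\<dots> = (\<Sum>i\<in>{length w}. lk x (take i w) * lk (sc a) (drop i w))"
    by (rule sum.mono_neutral_right) (auto simp: sc_def lookup_single when_def)
  finally show ?thesis by (simp add: sc_def lookup_single)
qed

lemma sc_comm: "sc a * x = x * sc a"
  by (rule poly_mapping_eqI) (simp add: lk_sc_mult lk_mult_sc mult.commute)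

lemma sc_mult: "sc (a * b) = sc a * sc b"
  by (simp add: sc_def mult_single)
lemma sc_add: "sc (a + b) = sc a + sc b"
  by (simp add: sc_def single_add)
lemma sc_one[simp]: "sc 1 = 1"
  by (simp add: sc_def)
lemma sc_zero[simp]: "sc 0 = 0"
  by (simp add: sc_def)
lemma sc_mult_sg: "sc a * sg u b = sg u (a * b)"
  by (simp add: sc_def mult_single)
lemma sc_assoc_left: "sc a * (sc b * x) = sc (a * b) * x"
  by (simp add: sc_mult mult.assoc)
lemma sc_distrib: "sc a * (x + y) = sc a * x + sc a * y"
  by (simp add: distrib_left)

definition fs :: "('a \<Rightarrow> 'b::zero) \<Rightarrow> bool" where "fs p \<longleftrightarrow> finite {w. p w \<noteq> 0}"

lemma fs_lk: "fs p \<Longrightarrow> p = lk (Abs_poly_mapping p)"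
  by (simp add: fs_def)

lemma fa_mult_lk: "fa_mult (lk x) (lk y) = lk (x * y :: ('g,'k::field) rg)"
  by (rule ext) (simp add: fa_mult_def lookup_mult_list)
lemma fa_add_lk: "fa_add (lk x) (lk y) = lk (x + y)"
  by (rule ext) (simp add: fa_add_def lookup_add)
lemma fa_diff_lk: "fa_diff (lk x) (lk y) = lk (x - y)"
  by (rule ext) (simp add: fa_diff_def lookup_minus)
lemma fa_smul_lk: "fa_smul a (lk x) = lk (sc a * x)"
  by (rule ext) (simp add: fa_smul_def lk_sc_mult)
lemma fa_zero_lk: "fa_zero = lk 0"
  by (rule ext) (simp add: fa_zero_def)
lemma fa_gen_lk: "fa_gen g = lk (sg [g] 1)"
  by (rule ext) (simp add: fa_gen_def lookup_single when_def)
lemma ghat_lk: "ghat g = lk (sg [g] 1)"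
  by (simp add: ghat_def fa_gen_lk)
lemma fa_sum_lk: "fa_sum B (\<lambda>i. lk (f i)) = lk (sum f B)"
  by (rule ext) (simp add: fa_sum_def lookup_sum)

lemma fa_listprod_lk: fixes F :: "'a \<Rightarrow> ('g,'k::field) rg"
  shows "u \<noteq> [] \<Longrightarrow> fa_listprod (map (\<lambda>g. lk (F g)) u) = lk (prod_list (map F u))"
proof (induction u)
  case Nil then show ?case by simp
next
  case (Cons a u)
  show ?case
  proof (cases "u = []")
    case True then show ?thesis by simp
  next
    case False
    then obtain b u' where "u = b # u'" by (cases u) auto
    then show ?thesis using Cons False by (simp add: fa_mult_lk)
  qed
qed

definition evR :: "('g \<Rightarrow> ('h,'k::field) rg) \<Rightarrow> ('g,'k) rg \<Rightarrow> ('h,'k) rg" where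
  "evR F x = (\<Sum>u\<in>ks x. sc (lk x u) * prod_list (map F u))"

lemma fa_eval_lk: assumes "[] \<notin> ks x"
  shows "fa_eval (\<lambda>g. lk (F g)) (lk x) = lk (evR F x)"
proof (rule ext)
  fix w
  have k: "{u. lk x u \<noteq> 0} = ks x" by (auto simp: in_keys_iff)
  have "fa_eval (\<lambda>g. lk (F g)) (lk x) w = (\<Sum>u\<in>ks x. lk x u * lk (prod_list (map F u)) w)"
    unfolding fa_eval_def k
  proof (rule sum.cong)
    fix u assume "u \<in> ks x"
    then have "u \<noteq> []" using assms by auto
    then show "lk x u * fa_listprod (map (\<lambda>g. lk (F g)) u) w = lk x u * lk (prod_list (map F u)) w"
      by (simp add: fa_listprod_lk)
  qed simp
  also have "\<dots> = lk (evR F x) w"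
    by (simp add: evR_def lookup_sum lk_sc_mult)
  finally show "fa_eval (\<lambda>g. lk (F g)) (lk x) w = lk (evR F x) w" .
qed

lemma gstar_gstar[simp]: "gstar (gstar g) = g"
  by (cases g) auto

definition starR :: "('k \<Rightarrow> 'k) \<Rightarrow> (('v,'e) gen,'k::field) rg \<Rightarrow> (('v,'e) gen,'k) rg" where
  "starR c x = Abs_poly_mapping (\<lambda>w. c (lk x (rev (map gstar w))))"

lemma rev_map_gstar_inv[simp]: "rev (map gstar (rev (map gstar w))) = w"
  by (simp add: rev_map comp_def)

lemma lk_starR: assumes "c 0 = 0"
  shows "lk (starR c x) = (\<lambda>w. c (lk x (rev (map gstar w))))"
proof -
  have "{w. c (lk x (rev (map gstar w))) \<noteq> 0} \<subseteq> (\<lambda>u. rev (map gstar u)) ` ks x"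
  proof
    fix w assume "w \<in> {w. c (lk x (rev (map gstar w))) \<noteq> 0}"
    then have "rev (map gstar w) \<in> ks x" using assms by (auto simp: in_keys_iff)
    then show "w \<in> (\<lambda>u. rev (map gstar u)) ` ks x" by (intro image_eqI[of _ _ "rev (map gstar w)"]) auto
  qed
  then have "finite {w. c (lk x (rev (map gstar w))) \<noteq> 0}" by (rule finite_subset) simp
  then show ?thesis by (simp add: starR_def)
qed

lemma fa_star_lk: "c 0 = 0 \<Longrightarrow> fa_star c (lk x) = lk (starR c x)"
  by (simp add: fa_star_def lk_starR)

definition ok :: "'g set \<Rightarrow> ('g,'k::field) rg \<Rightarrow> bool" where
  "ok X x \<longleftrightarrow> (\<forall>u\<in>ks x. u \<noteq> [] \<and> set u \<subseteq> X)"

lemma carrier_lk: "lk x \<in> fa_carrier X \<longleftrightarrow> ok X x"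
  by (auto simp: fa_carrier_def ok_def in_keys_iff)

lemma carrier_obtain: assumes "p \<in> fa_carrier X"
  obtains x where "p = lk x" "ok X x"
proof -
  have "fs p" using assms by (simp add: fa_carrier_def fs_def)
  then have "p = lk (Abs_poly_mapping p)" by (rule fs_lk)
  with assms show ?thesis using that carrier_lk by metis
qed

inductive_set IR :: "'g set \<Rightarrow> ('g,'k::field) rg set \<Rightarrow> ('g,'k) rg set"
  for X :: "'g set" and R :: "('g,'k) rg set" where
  base: "r \<in> R \<Longrightarrow> r \<in> IR X R"
| zero: "0 \<in> IR X R"
| add: "p \<in> IR X R \<Longrightarrow> q \<in> IR X R \<Longrightarrow> p + q \<in> IR X R"
| smul: "p \<in> IR X R \<Longrightarrow> sc a * p \<in> IR X R"
| lmult: "p \<in> IR X R \<Longrightarrow> ok X a \<Longrightarrow> a * p \<in> IR X R"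
| rmult: "p \<in> IR X R \<Longrightarrow> ok X a \<Longrightarrow> p * a \<in> IR X R"

lemma lk_inj: "lk x = lk y \<Longrightarrow> x = y"
  by (rule poly_mapping_eqI) simp

lemma fa_ideal_lk: "fa_ideal X (lk ` R) = lk ` IR X R"
proof
  show "fa_ideal X (lk ` R) \<subseteq> lk ` IR X R"
  proof
    fix p assume "p \<in> fa_ideal X (lk ` R)"
    then show "p \<in> lk ` IR X R"
    proof induction
      case (base r)
      then obtain x where "x \<in> R" "r = lk x" by auto
      then show ?case using IR.base[of x R X] by blast
    next
      case zero then show ?case unfolding fa_zero_lk using IR.zero[of X R] by (rule imageI)
    next
      case (add p q)
      then obtain x y where "x \<in> IR X R" "p = lk x" "y \<in> IR X R" "q = lk y" by auto
      moreover have "x + y \<in> IR X R" using calculation by (intro IR.add)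
      ultimately show ?case by (simp add: fa_add_lk)
    next
      case (smul p a)
      then obtain x where "x \<in> IR X R" "p = lk x" by auto
      moreover have "sc a * x \<in> IR X R" using calculation by (intro IR.smul)
      ultimately show ?case by (simp add: fa_smul_lk)
    next
      case (lmult p a)
      then obtain x where x: "x \<in> IR X R" "p = lk x" by auto
      obtain a' where a: "a = lk a'" "ok X a'" using lmult(2) by (rule carrier_obtain)
      have "fa_mult a p = lk (a' * x)" using x a by (simp add: fa_mult_lk)
      moreover have "a' * x \<in> IR X R" using x a by (intro IR.lmult)
      ultimately show ?case by blast
    next
      case (rmult p a)
      then obtain x where x: "x \<in> IR X R" "p = lk x" by auto
      obtain a' where a: "a = lk a'" "ok X a'" using rmult(2) by (rule carrier_obtain)
      have "fa_mult p a = lk (x * a')" using x a by (simp add: fa_mult_lk)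
      moreover have "x * a' \<in> IR X R" using x a by (intro IR.rmult)
      ultimately show ?case by blast
    qed
  qed
next
  show "lk ` IR X R \<subseteq> fa_ideal X (lk ` R)"
  proof
    fix p assume "p \<in> lk ` IR X R"
    then obtain x where x: "x \<in> IR X R" "p = lk x" by auto
    from x(1) have "lk x \<in> fa_ideal X (lk ` R)"
    proof induction
      case (base r) then show ?case by (simp add: fa_ideal.base)
    next
      case zero then show ?case using fa_ideal.zero[of X "lk ` R"] unfolding fa_zero_lk .
    next
      case (add p q) then show ?case using fa_ideal.add[of "lk p" X "lk ` R" "lk q"] by (simp add: fa_add_lk)
    next
      case (smul p a) then show ?case using fa_ideal.smul[of "lk p" X "lk ` R" a] by (simp add: fa_smul_lk)
    next
      case (lmult p a)
      then have "fa_mult (lk a) (lk p) \<in> fa_ideal X (lk ` R)" by (simp add: carrier_lk fa_ideal.lmult)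
      then show ?case by (simp add: fa_mult_lk)
    next
      case (rmult p a)
      then have "fa_mult (lk p) (lk a) \<in> fa_ideal X (lk ` R)" by (simp add: carrier_lk fa_ideal.rmult)
      then show ?case by (simp add: fa_mult_lk)
    qed
    with x show "p \<in> fa_ideal X (lk ` R)" by simp
  qed
qed

lemma lk_in_image_iff: "lk x \<in> lk ` A \<longleftrightarrow> x \<in> A"
  by (auto dest: lk_inj)



lemma sc_neg: "sc (-1) * x = - x"
  by (rule poly_mapping_eqI) (simp add: lk_sc_mult)

lemma ks_sc: "ks (sc a * x) \<subseteq> ks x"
  by (auto simp: in_keys_iff lk_sc_mult)

lemma mono_exp: "x = (\<Sum>u\<in>ks x. sg u (lk x u))"
proof (rule poly_mapping_eqI)
  fix w
  have "lk (\<Sum>u\<in>ks x. sg u (lk x u)) w = (\<Sum>u\<in>ks x. if u = w then lk x u else 0)"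
    by (simp add: lookup_sum lookup_single when_def)
  also have "\<dots> = lk x w" by (simp add: in_keys_iff)
  finally show "lk x w = lk (\<Sum>u\<in>ks x. sg u (lk x u)) w" by simp
qed

subsection \<open>Evaluation\<close>

lemma ev_superset: assumes "finite B" "ks x \<subseteq> B"
  shows "evR F x = (\<Sum>u\<in>B. sc (lk x u) * prod_list (map F u))"
  unfolding evR_def by (rule sum.mono_neutral_left) (use assms in \<open>auto simp: in_keys_iff\<close>)

lemma ev_zero[simp]: "evR F 0 = 0"
  by (simp add: evR_def)

lemma ev_add: "evR F (x + y) = evR F x + evR F y"
proof -
  let ?B = "ks x \<union> ks y"
  let ?P = "\<lambda>u. prod_list (map F u)"
  have "evR F (x+y) = (\<Sum>u\<in>?B. sc (lk (x+y) u) * ?P u)"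
    by (rule ev_superset) (use keys_add[of x y] in auto)
  also have "\<dots> = (\<Sum>u\<in>?B. sc (lk x u) * ?P u) + (\<Sum>u\<in>?B. sc (lk y u) * ?P u)"
    by (simp add: lookup_add sc_add distrib_right sum.distrib)
  also have "\<dots> = evR F x + evR F y"
    by (simp add: ev_superset[symmetric])
  finally show ?thesis .
qed

lemma ev_sc: "evR F (sc a * x) = sc a * evR F x"
proof -
  let ?P = "\<lambda>u. prod_list (map F u)"
  have "evR F (sc a * x) = (\<Sum>u\<in>ks x. sc (lk (sc a * x) u) * ?P u)"
    by (rule ev_superset) (use ks_sc in auto)
  also have "\<dots> = sc a * evR F x"
    by (simp add: evR_def lk_sc_mult sc_mult sum_distrib_left mult.assoc)
  finally show ?thesis .
qed

lemma ev_uminus: "evR F (- x) = - evR F x"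
  using ev_sc[of F "-1" x] by (simp only: sc_neg)

lemma ev_diff: "evR F (x - y) = evR F x - evR F y"
  by (simp only: diff_conv_add_uminus ev_add ev_uminus)

lemma ev_sum: "evR F (sum f B) = (\<Sum>i\<in>B. evR F (f i))"
  by (induction B rule: infinite_finite_induct) (auto simp: ev_add)

lemma ev_single: "evR F (sg u a) = sc a * prod_list (map F u)"
proof -
  have "evR F (sg u a) = (\<Sum>v\<in>{u}. sc (lk (sg u a) v) * prod_list (map F v))"
    by (rule ev_superset) auto
  then show ?thesis by simp
qed

lemma ev_gen[simp]: "evR F (sg [g] 1) = F g"
  by (simp add: ev_single)

lemma ev_one[simp]: "evR F 1 = 1"
  using ev_single[of F "[]" 1] by simp

lemma ev_mult_single: "evR F (sg u a * y) = evR F (sg u a) * evR F y"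
proof -
  let ?P = "\<lambda>u. prod_list (map F u)"
  have e: "(\<Sum>v\<in>ks y. sg v (lk y v)) = y" by (rule mono_exp[symmetric])
  have "sg u a * y = sg u a * (\<Sum>v\<in>ks y. sg v (lk y v))" by (simp only: e)
  also have "\<dots> = (\<Sum>v\<in>ks y. sg (u @ v) (a * lk y v))"
    by (simp add: sum_distrib_left mult_single)
  finally have 1: "evR F (sg u a * y) = (\<Sum>v\<in>ks y. sc (a * lk y v) * ?P (u @ v))"
    by (simp add: ev_sum ev_single)
  have "(\<Sum>v\<in>ks y. sc (a * lk y v) * ?P (u @ v)) = (\<Sum>v\<in>ks y. (sc a * ?P u) * (sc (lk y v) * ?P v))"
  proof (rule sum.cong)
    fix v
    have "sc (a * lk y v) * ?P (u @ v) = sc a * (sc (lk y v) * ?P u) * ?P v"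
      by (simp add: sc_mult mult.assoc)
    also have "\<dots> = (sc a * ?P u) * (sc (lk y v) * ?P v)"
      by (simp only: sc_comm[of "lk y v" "?P u"] mult.assoc)
    finally show "sc (a * lk y v) * ?P (u @ v) = (sc a * ?P u) * (sc (lk y v) * ?P v)" .
  qed simp
  also have "\<dots> = (sc a * ?P u) * evR F y"
    by (simp add: evR_def sum_distrib_left)
  finally show ?thesis using 1 by (simp add: ev_single)
qed

lemma ev_mult: "evR F (x * y) = evR F x * evR F y"
proof -
  have e: "(\<Sum>u\<in>ks x. sg u (lk x u)) = x" by (rule mono_exp[symmetric])
  have "x * y = (\<Sum>u\<in>ks x. sg u (lk x u)) * y" by (simp only: e)
  also have "\<dots> = (\<Sum>u\<in>ks x. sg u (lk x u) * y)" by (simp add: sum_distrib_right)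
  finally have "evR F (x * y) = (\<Sum>u\<in>ks x. evR F (sg u (lk x u)) * evR F y)"
    by (simp add: ev_sum ev_mult_single)
  also have "\<dots> = evR F (\<Sum>u\<in>ks x. sg u (lk x u)) * evR F y"
    by (simp add: ev_sum sum_distrib_right)
  finally show ?thesis by (simp only: e)
qed

lemma prod_sg: "prod_list (map (\<lambda>g. sg [g] (1::'k::field)) u) = sg u 1"
  by (induction u) (simp_all add: mult_single)

lemma ev_id: "evR (\<lambda>g. sg [g] 1) x = x"
proof -
  have "evR (\<lambda>g. sg [g] 1) x = (\<Sum>u\<in>ks x. sg u (lk x u))"
    by (simp add: evR_def prod_sg sc_mult_sg)
  then show ?thesis by (simp add: mono_exp[symmetric])
qed

lemma ev_prod: "evR G (prod_list (map F u)) = prod_list (map (\<lambda>g. evR G (F g)) u)"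
  by (induction u) (simp_all add: ev_mult)

lemma ev_comp: "evR G (evR F x) = evR (\<lambda>g. evR G (F g)) x"
proof -
  have "evR G (evR F x) = (\<Sum>u\<in>ks x. sc (lk x u) * evR G (prod_list (map F u)))"
    unfolding evR_def[of F x] by (simp add: ev_sum ev_sc)
  then show ?thesis by (simp add: ev_prod evR_def[of "\<lambda>g. evR G (F g)" x])
qed

lemma ok_zero[simp]: "ok X 0"
  by (simp add: ok_def)

lemma ok_add[intro]: "ok X x \<Longrightarrow> ok X y \<Longrightarrow> ok X (x + y)"
  unfolding ok_def using keys_add[of x y] by blast

lemma ok_uminus[intro]: "ok X x \<Longrightarrow> ok X (- x)"
  by (simp add: ok_def)

lemma ok_diff[intro]: "ok X x \<Longrightarrow> ok X y \<Longrightarrow> ok X (x - y)"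
  unfolding ok_def using keys_diff[of x y] by blast

lemma ok_sc[intro]: "ok X x \<Longrightarrow> ok X (sc a * x)"
  unfolding ok_def using ks_sc[of a x] by blast

lemma ok_mult[intro]: assumes "ok X x" "ok X y" shows "ok X (x * y)"
  unfolding ok_def
proof
  fix w assume "w \<in> ks (x * y)"
  then obtain a b where "w = a + b" "a \<in> ks x" "b \<in> ks y" using keys_mult[of x y] by blast
  then show "w \<noteq> [] \<and> set w \<subseteq> X" using assms by (auto simp: ok_def)
qed

lemma ok_sum[intro]: "(\<And>i. i \<in> B \<Longrightarrow> ok X (f i)) \<Longrightarrow> ok X (sum f B)"
  by (induction B rule: infinite_finite_induct) (simp_all add: ok_add)

lemma ok_sg[intro]: "g \<in> X \<Longrightarrow> ok X (sg [g] a)"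
  by (simp add: ok_def)

lemma ok_prod: "u \<noteq> [] \<Longrightarrow> (\<And>g. g \<in> set u \<Longrightarrow> ok X (F g)) \<Longrightarrow> ok X (prod_list (map F u))"
proof (induction u)
  case Nil then show ?case by simp
next
  case (Cons a u)
  then show ?case by (cases "u = []") (simp_all add: ok_mult)
qed

lemma ok_ev: assumes "ok X x" "\<And>g. g \<in> X \<Longrightarrow> ok Y (F g)"
  shows "ok Y (evR F x)"
  unfolding evR_def
proof (intro ok_sum ok_sc)
  fix u assume "u \<in> ks x"
  then have "u \<noteq> []" "set u \<subseteq> X" using assms(1) by (auto simp: ok_def)
  then show "ok Y (prod_list (map F u))" using assms(2) by (intro ok_prod) auto
qed

subsection \<open>Ideals and congruence\<close>

lemma IR_uminus: "p \<in> IR X R \<Longrightarrow> - p \<in> IR X R"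
  using IR.smul[of p X R "-1"] by (simp only: sc_neg)

lemma IR_diff: "p \<in> IR X R \<Longrightarrow> q \<in> IR X R \<Longrightarrow> p - q \<in> IR X R"
  unfolding diff_conv_add_uminus by (intro IR.add IR_uminus)

lemma IR_sum: "(\<And>i. i \<in> B \<Longrightarrow> f i \<in> IR X R) \<Longrightarrow> sum f B \<in> IR X R"
  by (induction B rule: infinite_finite_induct) (auto intro: IR.zero IR.add)

lemma IR_ok: assumes "\<And>r. r \<in> R \<Longrightarrow> ok X r" shows "p \<in> IR X R \<Longrightarrow> ok X p"
  by (induction rule: IR.induct) (auto simp: assms)

definition cg :: "('g,'k::field) rg set \<Rightarrow> ('g,'k) rg \<Rightarrow> ('g,'k) rg \<Rightarrow> bool" where
  "cg I x y \<longleftrightarrow> x - y \<in> I"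

lemma cg_refl[intro, simp]: "cg (IR X R) x x"
  by (simp add: cg_def IR.zero)

lemma cg_eq: "x = y \<Longrightarrow> cg (IR X R) x y"
  by simp

lemma cg_sym: "cg (IR X R) x y \<Longrightarrow> cg (IR X R) y x"
  unfolding cg_def using IR_uminus by fastforce

lemma cg_trans[trans]: "cg (IR X R) x y \<Longrightarrow> cg (IR X R) y z \<Longrightarrow> cg (IR X R) x z"
  unfolding cg_def using IR.add by fastforce

lemma cg_eq_trans[trans]: "cg (IR X R) x y \<Longrightarrow> y = z \<Longrightarrow> cg (IR X R) x z"
  by simp
lemma eq_cg_trans[trans]: "x = y \<Longrightarrow> cg (IR X R) y z \<Longrightarrow> cg (IR X R) x z"
  by simp

lemma cg_add: "cg (IR X R) x x' \<Longrightarrow> cg (IR X R) y y' \<Longrightarrow> cg (IR X R) (x + y) (x' + y')"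
  unfolding cg_def using IR.add by (fastforce simp: algebra_simps)

lemma cg_uminus: "cg (IR X R) x x' \<Longrightarrow> cg (IR X R) (- x) (- x')"
  unfolding cg_def using IR_uminus by fastforce

lemma cg_diff: "cg (IR X R) x x' \<Longrightarrow> cg (IR X R) y y' \<Longrightarrow> cg (IR X R) (x - y) (x' - y')"
  unfolding diff_conv_add_uminus by (intro cg_add cg_uminus)

lemma cg_sc: "cg (IR X R) x x' \<Longrightarrow> cg (IR X R) (sc a * x) (sc a * x')"
  unfolding cg_def using IR.smul by (fastforce simp: right_diff_distrib)

lemma cg_lmult: "cg (IR X R) x x' \<Longrightarrow> ok X a \<Longrightarrow> cg (IR X R) (a * x) (a * x')"
  unfolding cg_def using IR.lmult by (fastforce simp: right_diff_distrib)

lemma cg_rmult: "cg (IR X R) x x' \<Longrightarrow> ok X a \<Longrightarrow> cg (IR X R) (x * a) (x' * a)"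
  unfolding cg_def using IR.rmult by (fastforce simp: left_diff_distrib)

lemma cg_mult: "cg (IR X R) x x' \<Longrightarrow> cg (IR X R) y y' \<Longrightarrow> ok X x' \<Longrightarrow> ok X y
   \<Longrightarrow> cg (IR X R) (x * y) (x' * y')"
  by (meson cg_lmult cg_rmult cg_trans)

lemma cg_sum: "(\<And>i. i \<in> B \<Longrightarrow> cg (IR X R) (f i) (g i)) \<Longrightarrow> cg (IR X R) (sum f B) (sum g B)"
  unfolding cg_def using IR_sum[of B "\<lambda>i. f i - g i"] by (simp add: sum_subtractf)

lemma cg_base: "x - y \<in> R \<Longrightarrow> cg (IR X R) x y"
  by (simp add: cg_def IR.base)

lemma cg_zero_iff: "cg (IR X R) x 0 \<longleftrightarrow> x \<in> IR X R"
  by (simp add: cg_def)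

lemma ev_prod_cong:
  assumes "u \<noteq> []" "set u \<subseteq> X"
    and "\<And>g. g \<in> X \<Longrightarrow> cg (IR Y R) (F g) (G g)" "\<And>g. g \<in> X \<Longrightarrow> ok Y (F g)"
    "\<And>g. g \<in> X \<Longrightarrow> ok Y (G g)"
  shows "cg (IR Y R) (prod_list (map F u)) (prod_list (map G u))"
  using assms(1,2)
proof (induction u)
  case Nil then show ?case by simp
next
  case (Cons a u)
  show ?case
  proof (cases "u = []")
    case True then show ?thesis using Cons assms by simp
  next
    case False
    have "cg (IR Y R) (F a * prod_list (map F u)) (G a * prod_list (map G u))"
      apply (rule cg_mult)
      using Cons False assms by (auto intro!: ok_prod)
    then show ?thesis by simp
  qed
qed

lemma ev_cong:
  assumes "ok X x"
    and "\<And>g. g \<in> X \<Longrightarrow> cg (IR Y R) (F g) (G g)" "\<And>g. g \<in> X \<Longrightarrow> ok Y (F g)"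
    "\<And>g. g \<in> X \<Longrightarrow> ok Y (G g)"
  shows "cg (IR Y R) (evR F x) (evR G x)"
  unfolding evR_def
proof (intro cg_sum cg_sc)
  fix u assume "u \<in> ks x"
  then have "u \<noteq> []" "set u \<subseteq> X" using assms(1) by (auto simp: ok_def)
  then show "cg (IR Y R) (prod_list (map F u)) (prod_list (map G u))"
    using assms by (intro ev_prod_cong) auto
qed

lemma ev_IR:
  assumes "\<And>g. g \<in> X \<Longrightarrow> ok Y (F g)" "\<And>r. r \<in> R \<Longrightarrow> evR F r \<in> IR Y R'"
  shows "p \<in> IR X R \<Longrightarrow> evR F p \<in> IR Y R'"
proof (induction rule: IR.induct)
  case (base r) then show ?case using assms by simp
next
  case zero then show ?case by (simp add: IR.zero)
next
  case (add p q) then show ?case by (simp add: ev_add IR.add)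
next
  case (smul p a) then show ?case by (simp add: ev_sc IR.smul)
next
  case (lmult p a) then show ?case using assms by (simp add: ev_mult IR.lmult ok_ev)
next
  case (rmult p a) then show ?case using assms by (simp add: ev_mult IR.rmult ok_ev)
qed



definition invol :: "('k::field \<Rightarrow> 'k) \<Rightarrow> bool" where
  "invol c \<longleftrightarrow> (\<forall>a b. c (a + b) = c a + c b) \<and> (\<forall>a b. c (a * b) = c a * c b) \<and> (\<forall>a. c (c a) = a)"

lemma invol_add: "invol c \<Longrightarrow> c (a + b) = c a + c b" by (simp add: invol_def)
lemma invol_mult: "invol c \<Longrightarrow> c (a * b) = c a * c b" by (simp add: invol_def)
lemma invol_inv: "invol c \<Longrightarrow> c (c a) = a" by (simp add: invol_def)
lemma invol_0: assumes "invol c" shows "c 0 = 0"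
proof -
  have "c 0 = c 0 + c 0" using invol_add[OF assms, of 0 0] by simp
  then show ?thesis by (simp only: add_cancel_right_right)
qed
lemma invol_1: assumes "invol c" shows "c 1 = 1"
proof -
  have "c 1 = c 1 * c 1" using invol_mult[OF assms, of 1 1] by simp
  then have "c 1 = 0 \<or> c 1 = 1" by (metis mult_cancel_right1)
  moreover have "c 1 \<noteq> 0" using invol_inv[OF assms, of 1] invol_0[OF assms] by auto
  ultimately show ?thesis by blast
qed
lemma invol_neg: assumes "invol c" shows "c (- a) = - c a"
proof -
  have "c (a + - a) = c a + c (- a)" by (rule invol_add[OF assms])
  then show ?thesis using invol_0[OF assms] by (simp add: eq_neg_iff_add_eq_0 add.commute)
qed
lemma invol_sum: assumes "invol c" shows "c (sum f B) = (\<Sum>i\<in>B. c (f i))"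
  by (induction B rule: infinite_finite_induct) (simp_all add: invol_0[OF assms] invol_add[OF assms])

context
  fixes c :: "'k::field \<Rightarrow> 'k"
  assumes c: "invol c"
begin

lemma lk_star: "lk (starR c x) w = c (lk x (rev (map gstar w)))"
  using lk_starR[of c x] invol_0[OF c] by simp

lemma star_add: "starR c (x + y) = starR c x + starR c y"
  by (rule poly_mapping_eqI) (simp add: lk_star lookup_add invol_add[OF c])

lemma star_uminus: "starR c (- x) = - starR c x"
  by (rule poly_mapping_eqI) (simp add: lk_star invol_neg[OF c])

lemma star_diff: "starR c (x - y) = starR c x - starR c y"
  by (simp only: diff_conv_add_uminus star_add star_uminus)

lemma star_zero: "starR c 0 = 0"
  by (rule poly_mapping_eqI) (simp add: lk_star invol_0[OF c])

lemma star_sum: "starR c (sum f B) = (\<Sum>i\<in>B. starR c (f i))"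
  by (rule poly_mapping_eqI) (simp add: lk_star lookup_sum invol_sum[OF c])

lemma star_sc: "starR c (sc a * x) = sc (c a) * starR c x"
  by (rule poly_mapping_eqI) (simp add: lk_star lk_sc_mult invol_mult[OF c])

lemma star_sg: "starR c (sg u a) = sg (rev (map gstar u)) (c a)"
proof (rule poly_mapping_eqI)
  fix w
  have "u = rev (map gstar w) \<longleftrightarrow> rev (map gstar u) = w" by auto
  then show "lk (starR c (sg u a)) w = lk (sg (rev (map gstar u)) (c a)) w"
    by (auto simp: lk_star lookup_single when_def invol_0[OF c])
qed

lemma star_star: "starR c (starR c x) = x"
  by (rule poly_mapping_eqI) (simp add: lk_star invol_inv[OF c])

lemma star_one: "starR c 1 = 1"
  using star_sg[of "[]" 1] by (simp add: invol_1[OF c])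

lemma star_gen: "starR c (sg [g] 1) = sg [gstar g] 1"
  using star_sg[of "[g]" 1] by (simp add: invol_1[OF c])

lemma star_mult: fixes x y :: "(('v,'e) gen,'k) rg"
  shows "starR c (x * y) = starR c y * starR c x"
proof (rule poly_mapping_eqI)
  fix w :: "('v,'e) gen list"
  let ?w = "rev (map gstar w)"
  let ?n = "length w"
  have "lk (starR c (x * y)) w = (\<Sum>i\<le>?n. c (lk x (take i ?w)) * c (lk y (drop i ?w)))"
    by (simp add: lk_star lookup_mult_list invol_sum[OF c] invol_mult[OF c])
  also have "\<dots> = (\<Sum>j\<le>?n. c (lk x (take (?n - j) ?w)) * c (lk y (drop (?n - j) ?w)))"
    by (rule sum.reindex_bij_witness[where i="\<lambda>i. ?n - i" and j="\<lambda>i. ?n - i"]) auto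
  also have "\<dots> = (\<Sum>j\<le>?n. lk (starR c y) (take j w) * lk (starR c x) (drop j w))"
  proof (rule sum.cong)
    fix j assume "j \<in> {..?n}"
    then have "take (?n - j) ?w = rev (map gstar (drop j w))"
      "drop (?n - j) ?w = rev (map gstar (take j w))"
      by (simp_all add: take_rev drop_rev drop_map take_map)
    then show "c (lk x (take (?n - j) ?w)) * c (lk y (drop (?n - j) ?w)) =
        lk (starR c y) (take j w) * lk (starR c x) (drop j w)"
      by (simp add: lk_star mult.commute)
  qed simp
  also have "\<dots> = lk (starR c y * starR c x) w"
    by (simp add: lookup_mult_list)
  finally show "lk (starR c (x * y)) w = lk (starR c y * starR c x) w" .
qed

lemma star_prod: "starR c (prod_list (map F u)) = prod_list (rev (map (\<lambda>g. starR c (F g)) u))"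
  by (induction u) (simp_all add: star_one star_mult)

lemma ev_star:
  assumes "\<And>g. F (gstar g) = starR c (F g)"
  shows "evR F (starR c x) = starR c (evR F x)"
proof -
  have e: "(\<Sum>u\<in>ks x. sg u (lk x u)) = x" by (rule mono_exp[symmetric])
  have "starR c x = starR c (\<Sum>u\<in>ks x. sg u (lk x u))" by (simp only: e)
  then have "evR F (starR c x) = (\<Sum>u\<in>ks x. sc (c (lk x u)) * prod_list (map F (rev (map gstar u))))"
    by (simp add: star_sum star_sg ev_sum ev_single)
  also have "\<dots> = (\<Sum>u\<in>ks x. sc (c (lk x u)) * starR c (prod_list (map F u)))"
    by (simp add: star_prod rev_map comp_def assms)
  also have "\<dots> = starR c (evR F x)"
    by (simp add: evR_def star_sum star_sc)
  finally show ?thesis .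
qed

end



definition gv :: "'v \<Rightarrow> (('v,'e) gen,'k::field) rg" where "gv v = sg [GV v] 1"
definition ge :: "'e \<Rightarrow> (('v,'e) gen,'k::field) rg" where "ge e = sg [GE e] 1"
definition gg :: "'e \<Rightarrow> (('v,'e) gen,'k::field) rg" where "gg e = sg [GG e] 1"

definition PR :: "('v,'e) graph \<Rightarrow> 'v \<Rightarrow> (('v,'e) gen,'k::field) rg" where
  "PR G v = (\<Sum>e\<in>out_edges G v. ge e * gg e)"

definition CLR :: "('v,'e) graph \<Rightarrow> 'v set \<Rightarrow> (('v,'e) gen,'k::field) rg set" where
  "CLR G S =
     {gv v * gv w - (if v = w then gv v else 0) | v w. v \<in> verts G \<and> w \<in> verts G}
   \<union> {gv (src G e) * ge e - ge e | e. e \<in> edges G}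
   \<union> {ge e * gv (rng G e) - ge e | e. e \<in> edges G}
   \<union> {gv (rng G e) * gg e - gg e | e. e \<in> edges G}
   \<union> {gg e * gv (src G e) - gg e | e. e \<in> edges G}
   \<union> {gg e * ge f - (if e = f then gv (rng G e) else 0) | e f. e \<in> edges G \<and> f \<in> edges G}
   \<union> {gv v - PR G v | v. v \<in> S}"

lemma if_lk: "(if P then lk a else lk b) = lk (if P then a else b)"
  by simp

lemma Psum_lk: "Psum G v = lk (PR G v)"
  unfolding Psum_def PR_def ghat_lk fa_mult_lk ge_def gg_def fa_sum_lk ..

lemma setc1: "{lk (f v) | v. P v} = lk ` {f v | v. P v}" by blast
lemma setc2: "{lk (f v w) | v w. P v w} = lk ` {f v w | v w. P v w}" by blast

lemma CL_rels_lk: "CL_rels G S = lk ` CLR G S"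
proof -
  have *: "\<And>x y. fa_diff (lk x) (lk y) = lk (x - y)" by (rule fa_diff_lk)
  show ?thesis
  unfolding CL_rels_def CLR_def image_Un ghat_lk fa_mult_lk fa_zero_lk if_lk * fa_sum_lk
    gv_def[symmetric] ge_def[symmetric] gg_def[symmetric] PR_def[symmetric]
  by (simp only: setc1 setc2)
qed

abbreviation II :: "('v,'e) graph \<Rightarrow> 'v set \<Rightarrow> (('v,'e) gen,'k::field) rg set" where
  "II G S \<equiv> IR (gens G) (CLR G S)"

lemma CL_ideal_lk: "CL_ideal G S = lk ` II G S"
  unfolding CL_ideal_def CL_rels_lk fa_ideal_lk ..

lemma gens_simps[simp]:
  "GV v \<in> gens G \<longleftrightarrow> v \<in> verts G" "GE e \<in> gens G \<longleftrightarrow> e \<in> edges G" "GG e \<in> gens G \<longleftrightarrow> e \<in> edges G"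
  by (auto simp: gens_def)

lemma ok_gv[intro]: "v \<in> verts G \<Longrightarrow> ok (gens G) (gv v)" by (simp add: gv_def ok_sg)
lemma ok_ge[intro]: "e \<in> edges G \<Longrightarrow> ok (gens G) (ge e)" by (simp add: ge_def ok_sg)
lemma ok_gg[intro]: "e \<in> edges G \<Longrightarrow> ok (gens G) (gg e)" by (simp add: gg_def ok_sg)
lemma ok_PR[intro]: "ok (gens G) (PR G v)"
  unfolding PR_def by (intro ok_sum ok_mult) (auto simp: out_edges_def)

lemma ok_CLR: "r \<in> CLR G S \<Longrightarrow> S \<subseteq> verts G \<Longrightarrow> wf_graph G \<Longrightarrow> ok (gens G) r"
  unfolding CLR_def wf_graph_def by (auto intro!: ok_diff ok_mult ok_gv ok_ge ok_gg)

lemma ok_II: "p \<in> II G S \<Longrightarrow> S \<subseteq> verts G \<Longrightarrow> wf_graph G \<Longrightarrow> ok (gens G) p"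
  by (rule IR_ok[of "CLR G S"]) (auto intro: ok_CLR)

context
  fixes G :: "('v,'e) graph" and S :: "'v set"
  assumes wf: "wf_graph G"
begin

lemma wf_src: "e \<in> edges G \<Longrightarrow> src G e \<in> verts G" using wf by (simp add: wf_graph_def)
lemma wf_rng: "e \<in> edges G \<Longrightarrow> rng G e \<in> verts G" using wf by (simp add: wf_graph_def)

lemma rV: "v \<in> verts G \<Longrightarrow> w \<in> verts G \<Longrightarrow>
   cg (II G S) (gv v * gv w) (if v = w then gv v else (0::(('v,'e) gen,'k::field) rg))"
  by (rule cg_base) (auto simp: CLR_def)

lemma rE1a: "e \<in> edges G \<Longrightarrow> cg (II G S) (gv (src G e) * ge e) (ge e :: (('v,'e) gen,'k::field) rg)"
  by (rule cg_base) (auto simp: CLR_def)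
lemma rE1b: "e \<in> edges G \<Longrightarrow> cg (II G S) (ge e * gv (rng G e)) (ge e :: (('v,'e) gen,'k::field) rg)"
  by (rule cg_base) (auto simp: CLR_def)
lemma rE2a: "e \<in> edges G \<Longrightarrow> cg (II G S) (gv (rng G e) * gg e) (gg e :: (('v,'e) gen,'k::field) rg)"
  by (rule cg_base) (auto simp: CLR_def)
lemma rE2b: "e \<in> edges G \<Longrightarrow> cg (II G S) (gg e * gv (src G e)) (gg e :: (('v,'e) gen,'k::field) rg)"
  by (rule cg_base) (auto simp: CLR_def)
lemma rCK1: "e \<in> edges G \<Longrightarrow> f \<in> edges G \<Longrightarrow>
   cg (II G S) (gg e * ge f) (if e = f then gv (rng G e) else (0::(('v,'e) gen,'k::field) rg))"
  by (rule cg_base) (auto simp: CLR_def)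
lemma rCK2: "v \<in> S \<Longrightarrow> cg (II G S) (gv v) (PR G v :: (('v,'e) gen,'k::field) rg)"
  by (rule cg_base) (auto simp: CLR_def)

end



context
  fixes G :: "('v,'e) graph" and S :: "'v set"
  assumes wf: "wf_graph G"
begin

lemma d_vE: assumes "v \<in> verts G" "f \<in> edges G"
  shows "cg (II G S) (gv v * ge f) (if v = src G f then ge f else (0::(('v,'e) gen,'k::field) rg))"
proof (cases "v = src G f")
  case True then show ?thesis using rE1a[OF wf assms(2)] by simp
next
  case False
  have "cg (II G S) (gv v * ge f) (gv v * (gv (src G f) * ge f))"
    by (rule cg_lmult[OF cg_sym[OF rE1a[OF wf assms(2)]]]) (use assms in auto)
  also have "gv v * (gv (src G f) * ge f) = (gv v * gv (src G f)) * ge f" by (simp add: mult.assoc)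
  also have "cg (II G S) \<dots> ((if v = src G f then gv v else 0) * ge f)"
    by (rule cg_rmult[OF rV[OF wf]]) (use assms wf_src[OF wf] in auto)
  finally show ?thesis using False by simp
qed

lemma d_Ev: assumes "v \<in> verts G" "f \<in> edges G"
  shows "cg (II G S) (ge f * gv v) (if rng G f = v then ge f else (0::(('v,'e) gen,'k::field) rg))"
proof (cases "rng G f = v")
  case True then show ?thesis using rE1b[OF wf assms(2)] by simp
next
  case False
  have "cg (II G S) (ge f * gv v) ((ge f * gv (rng G f)) * gv v)"
    by (rule cg_rmult[OF cg_sym[OF rE1b[OF wf assms(2)]]]) (use assms in auto)
  also have "(ge f * gv (rng G f)) * gv v = ge f * (gv (rng G f) * gv v)" by (simp add: mult.assoc)
  also have "cg (II G S) \<dots> (ge f * (if rng G f = v then gv (rng G f) else 0))"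
    by (rule cg_lmult[OF rV[OF wf]]) (use assms wf_rng[OF wf] in auto)
  finally show ?thesis using False by simp
qed

lemma d_vG: assumes "v \<in> verts G" "f \<in> edges G"
  shows "cg (II G S) (gv v * gg f) (if v = rng G f then gg f else (0::(('v,'e) gen,'k::field) rg))"
proof (cases "v = rng G f")
  case True then show ?thesis using rE2a[OF wf assms(2)] by simp
next
  case False
  have "cg (II G S) (gv v * gg f) (gv v * (gv (rng G f) * gg f))"
    by (rule cg_lmult[OF cg_sym[OF rE2a[OF wf assms(2)]]]) (use assms in auto)
  also have "gv v * (gv (rng G f) * gg f) = (gv v * gv (rng G f)) * gg f" by (simp add: mult.assoc)
  also have "cg (II G S) \<dots> ((if v = rng G f then gv v else 0) * gg f)"
    by (rule cg_rmult[OF rV[OF wf]]) (use assms wf_rng[OF wf] in auto)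
  finally show ?thesis using False by simp
qed

lemma d_Gv: assumes "v \<in> verts G" "f \<in> edges G"
  shows "cg (II G S) (gg f * gv v) (if src G f = v then gg f else (0::(('v,'e) gen,'k::field) rg))"
proof (cases "src G f = v")
  case True then show ?thesis using rE2b[OF wf assms(2)] by simp
next
  case False
  have "cg (II G S) (gg f * gv v) ((gg f * gv (src G f)) * gv v)"
    by (rule cg_rmult[OF cg_sym[OF rE2b[OF wf assms(2)]]]) (use assms in auto)
  also have "(gg f * gv (src G f)) * gv v = gg f * (gv (src G f) * gv v)" by (simp add: mult.assoc)
  also have "cg (II G S) \<dots> (gg f * (if src G f = v then gv (src G f) else 0))"
    by (rule cg_lmult[OF rV[OF wf]]) (use assms wf_src[OF wf] in auto)
  finally show ?thesis using False by simp
qed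

lemma out_edgesD: "e \<in> out_edges G v \<Longrightarrow> e \<in> edges G \<and> src G e = v"
  by (simp add: out_edges_def)

lemma d_vP: assumes "v \<in> verts G" "w \<in> verts G"
  shows "cg (II G S) (gv w * PR G v) (if w = v then PR G v else (0::(('v,'e) gen,'k::field) rg))"
proof -
  have "gv w * PR G v = (\<Sum>e\<in>out_edges G v. (gv w * ge e) * gg e)"
    by (simp add: PR_def sum_distrib_left mult.assoc)
  also have "cg (II G S) \<dots> (\<Sum>e\<in>out_edges G v. (if w = v then ge e * gg e else 0))"
  proof (rule cg_sum)
    fix e assume "e \<in> out_edges G v"
    then have e: "e \<in> edges G" "src G e = v" by (auto dest: out_edgesD)
    have "cg (II G S) ((gv w * ge e) * gg e) ((if w = src G e then ge e else 0) * gg e)"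
      by (rule cg_rmult[OF d_vE]) (use assms e in auto)
    then show "cg (II G S) ((gv w * ge e) * gg e) (if w = v then ge e * gg e else 0)"
      using e by (cases "w = v") auto
  qed
  also have "(\<Sum>e\<in>out_edges G v. (if w = v then ge e * gg e else 0)) = (if w = v then PR G v else 0)"
    by (simp add: PR_def)
  finally show ?thesis .
qed

lemma d_Pv: assumes "v \<in> verts G" "w \<in> verts G"
  shows "cg (II G S) (PR G v * gv w) (if v = w then PR G v else (0::(('v,'e) gen,'k::field) rg))"
proof -
  have "PR G v * gv w = (\<Sum>e\<in>out_edges G v. ge e * (gg e * gv w))"
    by (simp add: PR_def sum_distrib_right mult.assoc)
  also have "cg (II G S) \<dots> (\<Sum>e\<in>out_edges G v. (if v = w then ge e * gg e else 0))"
  proof (rule cg_sum)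
    fix e assume "e \<in> out_edges G v"
    then have e: "e \<in> edges G" "src G e = v" by (auto dest: out_edgesD)
    have "cg (II G S) (ge e * (gg e * gv w)) (ge e * (if src G e = w then gg e else 0))"
      by (rule cg_lmult[OF d_Gv]) (use assms e in auto)
    then show "cg (II G S) (ge e * (gg e * gv w)) (if v = w then ge e * gg e else 0)"
      using e by (cases "v = w") auto
  qed
  also have "(\<Sum>e\<in>out_edges G v. (if v = w then ge e * gg e else 0)) = (if v = w then PR G v else 0)"
    by (simp add: PR_def)
  finally show ?thesis .
qed

lemma d_GP: assumes "finite (out_edges G v)" "e \<in> edges G"
  shows "cg (II G S) (gg e * PR G v) (if src G e = v then gg e else (0::(('v,'e) gen,'k::field) rg))"
proof -
  have "gg e * PR G v = (\<Sum>f\<in>out_edges G v. (gg e * ge f) * gg f)"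
    by (simp add: PR_def sum_distrib_left mult.assoc)
  also have "cg (II G S) \<dots> (\<Sum>f\<in>out_edges G v. (if e = f then gv (rng G e) * gg e else 0))"
  proof (rule cg_sum)
    fix f assume "f \<in> out_edges G v"
    then have f: "f \<in> edges G" "src G f = v" by (auto dest: out_edgesD)
    have "cg (II G S) ((gg e * ge f) * gg f) ((if e = f then gv (rng G e) else 0) * gg f)"
      by (rule cg_rmult[OF rCK1[OF wf]]) (use assms f in auto)
    then show "cg (II G S) ((gg e * ge f) * gg f) (if e = f then gv (rng G e) * gg e else 0)"
      by (cases "e = f") auto
  qed
  also have "(\<Sum>f\<in>out_edges G v. (if e = f then gv (rng G e) * gg e else 0)) =
      (if src G e = v then gv (rng G e) * gg e else 0)"
    using assms by (simp add: out_edges_def)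
  also have "cg (II G S) \<dots> (if src G e = v then gg e else 0)"
    using rE2a[OF wf assms(2), where S=S] by (cases "src G e = v") auto
  finally show ?thesis .
qed

lemma d_PE: assumes "finite (out_edges G v)" "e \<in> edges G"
  shows "cg (II G S) (PR G v * ge e) (if src G e = v then ge e else (0::(('v,'e) gen,'k::field) rg))"
proof -
  have "PR G v * ge e = (\<Sum>f\<in>out_edges G v. ge f * (gg f * ge e))"
    by (simp add: PR_def sum_distrib_right mult.assoc)
  also have "cg (II G S) \<dots> (\<Sum>f\<in>out_edges G v. (if f = e then ge e * gv (rng G e) else 0))"
  proof (rule cg_sum)
    fix f assume "f \<in> out_edges G v"
    then have f: "f \<in> edges G" "src G f = v" by (auto dest: out_edgesD)
    have "cg (II G S) (ge f * (gg f * ge e)) (ge f * (if f = e then gv (rng G f) else 0))"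
      by (rule cg_lmult[OF rCK1[OF wf]]) (use assms f in auto)
    then show "cg (II G S) (ge f * (gg f * ge e)) (if f = e then ge e * gv (rng G e) else 0)"
      by (cases "e = f") auto
  qed
  also have "(\<Sum>f\<in>out_edges G v. (if f = e then ge e * gv (rng G e) else 0)) =
      (if src G e = v then ge e * gv (rng G e) else 0)"
    using assms by (simp add: out_edges_def)
  also have "cg (II G S) \<dots> (if src G e = v then ge e else 0)"
    using rE1b[OF wf assms(2), where S=S] by (cases "src G e = v") auto
  finally show ?thesis .
qed

lemma d_PP: assumes "v \<in> verts G" "w \<in> verts G"
  shows "cg (II G S) (PR G v * PR G w) (if v = w then PR G v else (0::(('v,'e) gen,'k::field) rg))"
proof (cases "finite (out_edges G v)")
  case False
  then show ?thesis by (cases "v = w") (simp_all add: PR_def)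
next
  case True
  have "PR G v * PR G w = (\<Sum>f\<in>out_edges G w. (PR G v * ge f) * gg f)"
    by (simp add: PR_def[of G w] sum_distrib_left mult.assoc)
  also have "cg (II G S) \<dots> (\<Sum>f\<in>out_edges G w. (if v = w then ge f * gg f else 0))"
  proof (rule cg_sum)
    fix f assume "f \<in> out_edges G w"
    then have f: "f \<in> edges G" "src G f = w" by (auto dest: out_edgesD)
    have "cg (II G S) ((PR G v * ge f) * gg f) ((if src G f = v then ge f else 0) * gg f)"
      by (rule cg_rmult[OF d_PE]) (use True f in auto)
    then show "cg (II G S) ((PR G v * ge f) * gg f) (if v = w then ge f * gg f else 0)"
      using f by auto
  qed
  also have "(\<Sum>f\<in>out_edges G w. (if v = w then ge f * gg f else 0)) = (if v = w then PR G v else 0)"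
    by (simp add: PR_def)
  finally show ?thesis .
qed

end



abbreviation TT :: "('v,'e) graph \<Rightarrow> 'v set \<Rightarrow> 'v set" where "TT E S \<equiv> regular E - S"

lemma ES_simps[simp]:
  "verts (ES_graph E S) = Inl ` verts E \<union> Inr ` TT E S"
  "edges (ES_graph E S) = Inl ` edges E \<union> Inr ` {e \<in> edges E. rng E e \<in> TT E S}"
  "src (ES_graph E S) (Inl e) = Inl (src E e)"
  "src (ES_graph E S) (Inr e) = Inl (src E e)"
  "rng (ES_graph E S) (Inl e) = Inl (rng E e)"
  "rng (ES_graph E S) (Inr e) = Inr (rng E e)"
  by (simp_all add: ES_graph_def)

lemma ES_mem[simp]:
  "Inl v \<in> verts (ES_graph E S) \<longleftrightarrow> v \<in> verts E"
  "Inr v \<in> verts (ES_graph E S) \<longleftrightarrow> v \<in> TT E S"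
  "Inl e \<in> edges (ES_graph E S) \<longleftrightarrow> e \<in> edges E"
  "Inr e \<in> edges (ES_graph E S) \<longleftrightarrow> e \<in> edges E \<and> rng E e \<in> TT E S"
  by auto

lemma regular_verts: "regular E \<subseteq> verts E"
  by (auto simp: regular_def)

lemma out_ES_Inl: "out_edges (ES_graph E S) (Inl v) =
    Inl ` out_edges E v \<union> Inr ` {e \<in> out_edges E v. rng E e \<in> TT E S}"
  by (auto simp: out_edges_def ES_graph_def)

lemma out_ES_Inr: "out_edges (ES_graph E S) (Inr v) = {}"
  by (auto simp: out_edges_def ES_graph_def)

lemma regular_ES: fixes E :: "('v,'e) graph"
  shows "regular (ES_graph E S) = Inl ` regular E"
proof -
  have "Inl v \<in> regular (ES_graph E S) \<longleftrightarrow> v \<in> regular E" for v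
  proof -
    have f: "finite (out_edges (ES_graph E S) (Inl v)) \<longleftrightarrow> finite (out_edges E v)"
    proof
      assume "finite (out_edges (ES_graph E S) (Inl v))"
      then have "finite (Inl ` out_edges E v :: ('e + 'e) set)" unfolding out_ES_Inl by simp
      then show "finite (out_edges E v)" by (simp add: finite_image_iff)
    next
      assume "finite (out_edges E v)"
      then show "finite (out_edges (ES_graph E S) (Inl v))" unfolding out_ES_Inl by simp
    qed
    show ?thesis unfolding regular_def using f by (auto simp: out_ES_Inl)
  qed
  moreover have "Inr v \<notin> regular (ES_graph E S)" for v
    by (simp add: regular_def out_ES_Inr)
  ultimately show ?thesis by (auto elim: sumE) (metis Inl_Inr_False sumE imageI)+
qed

lemma wf_ES: "wf_graph E \<Longrightarrow> wf_graph (ES_graph E S)"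
  by (auto simp: wf_graph_def ES_graph_def out_edges_def)

definition qv :: "('v,'e) graph \<Rightarrow> 'v set \<Rightarrow> 'v + 'v \<Rightarrow> (('v,'e) gen,'k::field) rg" where
  "qv E S x = (case x of Inl v \<Rightarrow> (if v \<in> TT E S then PR E v else gv v) | Inr v \<Rightarrow> gv v - PR E v)"

definition F1e :: "('v,'e) graph \<Rightarrow> 'v set \<Rightarrow> 'e + 'e \<Rightarrow> (('v,'e) gen,'k::field) rg" where
  "F1e E S a = (case a of Inl e \<Rightarrow> ge e * qv E S (Inl (rng E e)) | Inr e \<Rightarrow> ge e * qv E S (Inr (rng E e)))"

definition F1 :: "('k \<Rightarrow> 'k) \<Rightarrow> ('v,'e) graph \<Rightarrow> 'v set \<Rightarrow> ('v + 'v, 'e + 'e) gen \<Rightarrow> (('v,'e) gen,'k::field) rg" where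
  "F1 c E S g = (case g of GV x \<Rightarrow> qv E S x | GE a \<Rightarrow> F1e E S a | GG a \<Rightarrow> starR c (F1e E S a))"

lemma F1_simps[simp]:
  "F1 c E S (GV x) = qv E S x" "F1 c E S (GE a) = F1e E S a" "F1 c E S (GG a) = starR c (F1e E S a)"
  by (simp_all add: F1_def)

lemma phi_vert_lk: "phi_vert E S x = lk (qv E S x)"
  by (cases x) (simp_all add: phi_vert_def qv_def Psum_lk ghat_lk gv_def fa_diff_lk if_lk)

lemma phi_edge_lk: "phi_edge E S a = lk (F1e E S a)"
  by (cases a) (simp_all add: phi_edge_def F1e_def phi_vert_lk ghat_lk ge_def fa_mult_lk)

lemma phi_gen_lk: assumes "invol c" shows "phi_gen c E S = (\<lambda>g. lk (F1 c E S g))"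
proof
  fix g show "phi_gen c E S g = lk (F1 c E S g)"
    by (cases g) (simp_all add: phi_gen_def phi_vert_lk phi_edge_lk fa_star_lk invol_0[OF assms])
qed

context
  fixes c :: "'k::field \<Rightarrow> 'k"
  assumes c: "invol c"
begin

lemma star_gv[simp]: "starR c (gv v) = gv v" by (simp add: gv_def star_gen[OF c])
lemma star_ge[simp]: "starR c (ge e) = gg e" by (simp add: ge_def gg_def star_gen[OF c])
lemma star_gg[simp]: "starR c (gg e) = ge e" by (simp add: ge_def gg_def star_gen[OF c])
lemma star_PR[simp]: "starR c (PR G v) = PR G v"
  by (simp add: PR_def star_sum[OF c] star_mult[OF c])
lemma star_qv[simp]: "starR c (qv E S x) = qv E S x"
  by (cases x) (simp_all add: qv_def star_diff[OF c])

lemma F1_GG: "F1 c E S (GG (Inl e)) = qv E S (Inl (rng E e)) * gg e"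
   "F1 c E S (GG (Inr e)) = qv E S (Inr (rng E e)) * gg e"
  by (simp_all add: F1e_def star_mult[OF c])

lemma F1_star: "F1 c E S (gstar g) = starR c (F1 c E S g)"
  by (cases g) (simp_all add: star_star[OF c] F1_def)

end



definition Lc :: "('v,'e) graph \<Rightarrow> 'k \<Rightarrow> 'k \<Rightarrow> 'v \<Rightarrow> (('v,'e) gen,'k::field) rg" where
  "Lc E a b v = sc a * gv v + sc b * PR E v"

lemma sc_mm: "sc a * x * (sc b * y) = sc (a * b) * (x * y)"
proof -
  have "sc a * x * (sc b * y) = sc a * (x * sc b) * y" by (simp add: mult.assoc)
  also have "\<dots> = sc a * (sc b * x) * y" by (simp only: sc_comm)
  finally show ?thesis by (simp add: sc_mult mult.assoc)
qed

fun vx :: "'v + 'v \<Rightarrow> 'v" where "vx (Inl v) = v" | "vx (Inr v) = v"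

definition qa :: "('v,'e) graph \<Rightarrow> 'v set \<Rightarrow> 'v + 'v \<Rightarrow> 'k::field" where
  "qa E S x = (case x of Inl v \<Rightarrow> (if v \<in> TT E S then 0 else 1) | Inr v \<Rightarrow> 1)"
definition qb :: "('v,'e) graph \<Rightarrow> 'v set \<Rightarrow> 'v + 'v \<Rightarrow> 'k::field" where
  "qb E S x = (case x of Inl v \<Rightarrow> (if v \<in> TT E S then 1 else 0) | Inr v \<Rightarrow> -1)"

lemma qv_L: "qv E S x = Lc E (qa E S x) (qb E S x) (vx x)"
  by (cases x) (simp_all add: qv_def Lc_def qa_def qb_def sc_neg)

lemma Lc_00[simp]: "Lc E 0 0 v = 0" by (simp add: Lc_def)
lemma gv_L: "gv v = Lc E 1 0 v" by (simp add: Lc_def)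

context
  fixes E :: "('v,'e) graph" and S :: "'v set"
  assumes wf: "wf_graph E" and SR: "S \<subseteq> regular E"
begin

lemma L_mult: assumes "v \<in> verts E" "w \<in> verts E"
  shows "cg (II E S) (Lc E a b v * Lc E a' b' w)
     (if v = w then Lc E (a * a') (a * b' + b * a' + b * b') v else (0::(('v,'e) gen,'k::field) rg))"
proof -
  have "Lc E a b v * Lc E a' b' w = sc (a*a') * (gv v * gv w) + sc (a*b') * (gv v * PR E w)
      + sc (b*a') * (PR E v * gv w) + sc (b*b') * (PR E v * PR E w)"
    by (simp add: Lc_def distrib_left distrib_right sc_mm add.assoc)
  also have "cg (II E S) \<dots> (sc (a*a') * (if v = w then gv v else 0) + sc (a*b') * (if v = w then PR E w else 0)
      + sc (b*a') * (if v = w then PR E v else 0) + sc (b*b') * (if v = w then PR E v else 0))"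
    by (intro cg_add cg_sc rV[OF wf] d_vP[OF wf] d_Pv[OF wf] d_PP[OF wf]) (use assms in auto)
  also have "\<dots> = (if v = w then Lc E (a * a') (a * b' + b * a' + b * b') v else 0)"
    by (simp add: Lc_def sc_add distrib_right add.assoc)
  finally show ?thesis .
qed

lemma vx_verts: "x \<in> verts (ES_graph E S) \<Longrightarrow> vx x \<in> verts E"
  using SR regular_verts[of E] by (cases x) auto

lemma Q1: assumes "x \<in> verts (ES_graph E S)" "y \<in> verts (ES_graph E S)"
  shows "cg (II E S) (qv E S x * qv E S y) (if x = y then qv E S x else (0::(('v,'e) gen,'k::field) rg))"
proof -
  have "cg (II E S) (qv E S x * qv E S y) (if vx x = vx y then Lc E (qa E S x * qa E S y)
     (qa E S x * qb E S y + qb E S x * qa E S y + qb E S x * qb E S y) (vx x) else 0)"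
    unfolding qv_L by (rule L_mult) (use assms vx_verts in auto)
  also have "(if vx x = vx y then Lc E (qa E S x * qa E S y)
     (qa E S x * qb E S y + qb E S x * qa E S y + qb E S x * qb E S y) (vx x) else 0) =
     (if x = y then qv E S x else 0)"
    using assms by (cases x; cases y) (auto simp: qa_def qb_def qv_L)
  finally show ?thesis .
qed

lemma Q3a: assumes "x \<in> verts (ES_graph E S)" "w \<in> verts E"
  shows "cg (II E S) (gv w * qv E S x) (if w = vx x then qv E S x else (0::(('v,'e) gen,'k::field) rg))"
proof -
  have h1: "cg (II E S) (gv w * qv E S x) (if w = vx x then Lc E (1 * qa E S x)
     (1 * qb E S x + 0 * qa E S x + 0 * qb E S x) w else 0)"
    unfolding qv_L gv_L[of w E] by (rule L_mult) (use assms vx_verts in auto)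
  have h2: "(if w = vx x then Lc E (1 * qa E S x)
     (1 * qb E S x + 0 * qa E S x + 0 * qb E S x) w else 0) = (if w = vx x then qv E S x else (0::(('v,'e) gen,'k) rg))"
    by (auto simp: qv_L)
  show ?thesis by (rule cg_trans[OF h1 cg_eq[OF h2]])
qed

lemma Q3b: assumes "x \<in> verts (ES_graph E S)" "w \<in> verts E"
  shows "cg (II E S) (qv E S x * gv w) (if vx x = w then qv E S x else (0::(('v,'e) gen,'k::field) rg))"
proof -
  have h1: "cg (II E S) (qv E S x * gv w) (if vx x = w then Lc E (qa E S x * 1)
     (qa E S x * 0 + qb E S x * 1 + qb E S x * 0) (vx x) else 0)"
    unfolding qv_L gv_L[of w E] by (rule L_mult) (use assms vx_verts in auto)
  have h2: "(if vx x = w then Lc E (qa E S x * 1)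
     (qa E S x * 0 + qb E S x * 1 + qb E S x * 0) (vx x) else 0) = (if vx x = w then qv E S x else (0::(('v,'e) gen,'k) rg))"
    by (auto simp: qv_L)
  show ?thesis by (rule cg_trans[OF h1 cg_eq[OF h2]])
qed

lemma Q2: "qv E S (Inl v) + (if v \<in> TT E S then qv E S (Inr v) else 0) = gv v"
  by (simp add: qv_def)

lemma reg_finite: "v \<in> regular E \<Longrightarrow> finite (out_edges E v)"
  by (simp add: regular_def)

lemma Q5: assumes "e \<in> edges E"
  shows "cg (II E S) (qv E S (Inl (src E e)) * ge e) (ge e :: (('v,'e) gen,'k::field) rg)"
proof (cases "src E e \<in> TT E S")
  case True
  then have "(qv E S (Inl (src E e)) :: (('v,'e) gen,'k) rg) = PR E (src E e)" by (simp add: qv_def)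
  then show ?thesis using True d_PE[OF wf reg_finite assms, of "src E e" S] by simp
next
  case False
  then have "(qv E S (Inl (src E e)) :: (('v,'e) gen,'k) rg) = gv (src E e)" by (auto simp add: qv_def)
  then show ?thesis using rE1a[OF wf assms, of S] by simp
qed

lemma Q5': assumes "e \<in> edges E"
  shows "cg (II E S) (gg e * qv E S (Inl (src E e))) (gg e :: (('v,'e) gen,'k::field) rg)"
proof (cases "src E e \<in> TT E S")
  case True
  then have "(qv E S (Inl (src E e)) :: (('v,'e) gen,'k) rg) = PR E (src E e)" by (simp add: qv_def)
  then show ?thesis using True d_GP[OF wf reg_finite assms, of "src E e" S] by simp
next
  case False
  then have "(qv E S (Inl (src E e)) :: (('v,'e) gen,'k) rg) = gv (src E e)" by (auto simp add: qv_def)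
  then show ?thesis using rE2b[OF wf assms, of S] by simp
qed

lemma ok_qv[intro]: "vx x \<in> verts E \<Longrightarrow> ok (gens E) (qv E S x)"
  by (cases x) (auto simp: qv_def)

end



fun ed :: "'e + 'e \<Rightarrow> 'e" where "ed (Inl e) = e" | "ed (Inr e) = e"

lemma F1e_eq: "F1e E S a = ge (ed a) * qv E S (rng (ES_graph E S) a)"
  by (cases a) (simp_all add: F1e_def)

lemma src_ES_ed: "src (ES_graph E S) a = Inl (src E (ed a))"
  by (cases a) simp_all

lemma vx_rng_ES: "vx (rng (ES_graph E S) a) = rng E (ed a)"
  by (cases a) simp_all

lemma ed_edges: "a \<in> edges (ES_graph E S) \<Longrightarrow> ed a \<in> edges E"
  by (cases a) auto

lemma ev_gv[simp]: "evR F (gv x) = F (GV x)" by (simp add: gv_def)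
lemma ev_ge[simp]: "evR F (ge x) = F (GE x)" by (simp add: ge_def)
lemma ev_gg[simp]: "evR F (gg x) = F (GG x)" by (simp add: gg_def)
lemma ev_if0: "evR F (if P then a else 0) = (if P then evR F a else 0)" by simp
lemma ev_PR: "evR F (PR G v) = (\<Sum>a\<in>out_edges G v. F (GE a) * F (GG a))"
  by (simp add: PR_def ev_sum ev_mult)

lemma cg_diff_mem: "cg (IR X R) x y \<Longrightarrow> x - y \<in> IR X R"
  by (simp add: cg_def)

context
  fixes E :: "('v,'e) graph" and S :: "'v set" and c :: "'k::field \<Rightarrow> 'k"
  assumes wf: "wf_graph E" and SR: "S \<subseteq> regular E" and c: "invol c"
begin

lemma F1GG_eq: "F1 c E S (GG a) = qv E S (rng (ES_graph E S) a) * gg (ed a)"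
  by (simp add: F1e_eq star_mult[OF c] star_qv[OF c] star_ge[OF c])

lemmas stars = star_mult[OF c] star_qv[OF c] star_ge[OF c]

lemma rng_ES_verts: "a \<in> edges (ES_graph E S) \<Longrightarrow> rng (ES_graph E S) a \<in> verts (ES_graph E S)"
  using wf_ES[OF wf, of S] by (simp add: wf_graph_def)

lemma ok_qvr: "a \<in> edges (ES_graph E S) \<Longrightarrow> ok (gens E) (qv E S (rng (ES_graph E S) a) :: (('v,'e) gen,'k) rg)"
  by (intro ok_qv[OF wf SR] vx_verts[OF wf SR] rng_ES_verts)

lemma ok_qvx: "x \<in> verts (ES_graph E S) \<Longrightarrow> ok (gens E) (qv E S x :: (('v,'e) gen,'k) rg)"
  by (intro ok_qv[OF wf SR] vx_verts[OF wf SR])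

lemma R1: assumes "x \<in> verts (ES_graph E S)" "y \<in> verts (ES_graph E S)"
  shows "evR (F1 c E S) (gv x * gv y - (if x = y then gv x else 0)) \<in> II E S"
  using Q1[OF wf SR assms] by (cases "x = y") (simp_all add: ev_diff ev_mult cg_def)

lemma R2: assumes "a \<in> edges (ES_graph E S)"
  shows "evR (F1 c E S) (gv (src (ES_graph E S) a) * ge a - ge a) \<in> II E S"
proof -
  let ?q = "qv E S (rng (ES_graph E S) a) :: (('v,'e) gen,'k) rg"
  have "cg (II E S) (qv E S (Inl (src E (ed a))) * ge (ed a) * ?q) (ge (ed a) * ?q)"
    by (rule cg_rmult[OF Q5[OF wf SR ed_edges[OF assms]] ok_qvr[OF assms]])
  then show ?thesis by (simp add: ev_diff ev_mult cg_def F1e_eq src_ES_ed mult.assoc)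
qed

lemma R3: assumes "a \<in> edges (ES_graph E S)"
  shows "evR (F1 c E S) (ge a * gv (rng (ES_graph E S) a) - ge a) \<in> II E S"
proof -
  let ?r = "rng (ES_graph E S) a"
  have "cg (II E S) (ge (ed a) * (qv E S ?r * qv E S ?r)) (ge (ed a) * (if ?r = ?r then qv E S ?r else 0))"
    by (rule cg_lmult[OF Q1[OF wf SR]]) (use assms rng_ES_verts ed_edges in auto)
  then show ?thesis by (simp add: ev_diff ev_mult cg_def F1e_eq mult.assoc)
qed

lemma R4: assumes "a \<in> edges (ES_graph E S)"
  shows "evR (F1 c E S) (gv (rng (ES_graph E S) a) * gg a - gg a) \<in> II E S"
proof -
  let ?r = "rng (ES_graph E S) a"
  have "cg (II E S) ((qv E S ?r * qv E S ?r) * gg (ed a)) ((if ?r = ?r then qv E S ?r else 0) * gg (ed a))"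
    by (rule cg_rmult[OF Q1[OF wf SR]]) (use assms rng_ES_verts ed_edges in auto)
  then show ?thesis by (simp add: ev_diff ev_mult cg_def F1e_eq stars mult.assoc)
qed

lemma R5: assumes "a \<in> edges (ES_graph E S)"
  shows "evR (F1 c E S) (gg a * gv (src (ES_graph E S) a) - gg a) \<in> II E S"
proof -
  let ?q = "qv E S (rng (ES_graph E S) a) :: (('v,'e) gen,'k) rg"
  have "cg (II E S) (?q * (gg (ed a) * qv E S (Inl (src E (ed a))))) (?q * gg (ed a))"
    by (rule cg_lmult[OF Q5'[OF wf SR ed_edges[OF assms]] ok_qvr[OF assms]])
  then show ?thesis by (simp add: ev_diff ev_mult cg_def F1e_eq stars src_ES_ed mult.assoc)
qed

lemma R6: assumes a: "a \<in> edges (ES_graph E S)" and b: "b \<in> edges (ES_graph E S)"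
  shows "evR (F1 c E S) (gg a * ge b - (if a = b then gv (rng (ES_graph E S) a) else 0)) \<in> II E S"
proof -
  let ?ra = "rng (ES_graph E S) a" and ?rb = "rng (ES_graph E S) b"
  let ?qa = "qv E S ?ra :: (('v,'e) gen,'k) rg" and ?qb = "qv E S ?rb :: (('v,'e) gen,'k) rg"
  have ea: "ed a \<in> edges E" and eb: "ed b \<in> edges E" using a b by (auto intro: ed_edges)
  have "?qa * gg (ed a) * (ge (ed b) * ?qb) = ?qa * (gg (ed a) * ge (ed b)) * ?qb"
    by (simp add: mult.assoc)
  also have "cg (II E S) \<dots> (?qa * (if ed a = ed b then gv (rng E (ed a)) else 0) * ?qb)"
    by (intro cg_rmult cg_lmult rCK1[OF wf ea eb] ok_qvr a b)
  also have "cg (II E S) \<dots> (if a = b then ?qa else 0)"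
  proof (cases "ed a = ed b")
    case False
    then have "a \<noteq> b" by auto
    then show ?thesis using False by simp
  next
    case True
    have "?qa * gv (rng E (ed a)) * ?qb = ?qa * (gv (rng E (ed a)) * ?qb)" by (simp add: mult.assoc)
    also have "cg (II E S) \<dots> (?qa * (if rng E (ed a) = vx ?rb then ?qb else 0))"
      by (intro cg_lmult Q3a[OF wf SR] ok_qvr a rng_ES_verts b wf_rng[OF wf ea])
    also have "\<dots> = ?qa * ?qb" using True by (simp add: vx_rng_ES)
    also have "cg (II E S) \<dots> (if ?ra = ?rb then ?qa else 0)"
      by (intro Q1[OF wf SR] rng_ES_verts a b)
    also have "(if ?ra = ?rb then ?qa else 0) = (if a = b then ?qa else 0)"
    proof -
      have "?ra = ?rb \<longleftrightarrow> a = b" using True by (cases a; cases b) auto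
      then show ?thesis by simp
    qed
    finally show ?thesis using True by simp
  qed
  finally have "cg (II E S) (?qa * gg (ed a) * (ge (ed b) * ?qb)) (if a = b then ?qa else 0)" .
  then show ?thesis
    by (cases "a = b") (simp_all add: ev_diff ev_mult cg_def F1e_eq stars)
qed

lemma R7: assumes v: "v \<in> regular E"
  shows "evR (F1 c E S) (gv (Inl v) - PR (ES_graph E S) (Inl v)) \<in> II E S"
proof -
  let ?T = "TT E S"
  let ?A = "out_edges E v"
  let ?B = "{e \<in> out_edges E v. rng E e \<in> ?T}"
  let ?f = "\<lambda>a. F1 c E S (GE a) * F1 c E S (GG a)"
  have fin: "finite ?A" using v by (simp add: regular_def)
  have "evR (F1 c E S) (PR (ES_graph E S) (Inl v)) = (\<Sum>a\<in>Inl ` ?A \<union> Inr ` ?B. ?f a)"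
    by (simp add: ev_PR out_ES_Inl)
  also have "\<dots> = (\<Sum>a\<in>Inl ` ?A. ?f a) + (\<Sum>a\<in>Inr ` ?B. ?f a)"
    by (rule sum.union_disjoint) (use fin in auto)
  also have "\<dots> = (\<Sum>e\<in>?A. ?f (Inl e)) + (\<Sum>e\<in>?B. ?f (Inr e))"
    by (simp add: sum.reindex)
  also have "\<dots> = (\<Sum>e\<in>?A. ge e * (qv E S (Inl (rng E e)) * qv E S (Inl (rng E e))) * gg e)
      + (\<Sum>e\<in>?B. ge e * (qv E S (Inr (rng E e)) * qv E S (Inr (rng E e))) * gg e)"
    by (simp add: F1e_def stars mult.assoc)
  also have "cg (II E S) \<dots> ((\<Sum>e\<in>?A. ge e * qv E S (Inl (rng E e)) * gg e)
      + (\<Sum>e\<in>?B. ge e * qv E S (Inr (rng E e)) * gg e))"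
  proof (intro cg_add cg_sum cg_rmult cg_lmult)
    fix e assume "e \<in> ?A"
    then have e: "e \<in> edges E" by (simp add: out_edges_def)
    show "cg (II E S) (qv E S (Inl (rng E e)) * qv E S (Inl (rng E e))) (qv E S (Inl (rng E e)))"
      using Q1[OF wf SR, of "Inl (rng E e)" "Inl (rng E e)"] wf_rng[OF wf e] by simp
    show "ok (gens E) (ge e)" "ok (gens E) (gg e)" using e by auto
  next
    fix e assume "e \<in> ?B"
    then have e: "e \<in> edges E" "rng E e \<in> ?T" by (auto simp: out_edges_def)
    show "cg (II E S) (qv E S (Inr (rng E e)) * qv E S (Inr (rng E e))) (qv E S (Inr (rng E e)))"
      using Q1[OF wf SR, of "Inr (rng E e)" "Inr (rng E e)"] e by simp
    show "ok (gens E) (ge e)" "ok (gens E) (gg e)" using e by auto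
  qed
  also have "(\<Sum>e\<in>?B. ge e * qv E S (Inr (rng E e)) * gg e)
      = (\<Sum>e\<in>?A. if rng E e \<in> ?T then ge e * qv E S (Inr (rng E e)) * gg e else 0)"
    by (rule sum.inter_filter[OF fin])
  also have "(\<Sum>e\<in>?A. ge e * qv E S (Inl (rng E e)) * gg e) +
      (\<Sum>e\<in>?A. if rng E e \<in> ?T then ge e * qv E S (Inr (rng E e)) * gg e else 0)
      = (\<Sum>e\<in>?A. ge e * (qv E S (Inl (rng E e)) + (if rng E e \<in> ?T then qv E S (Inr (rng E e)) else 0)) * gg e)"
    by (subst sum.distrib[symmetric]) (rule sum.cong[OF refl], auto simp: distrib_left distrib_right)
  also have "\<dots> = (\<Sum>e\<in>?A. ge e * gv (rng E e) * gg e)"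
    by (simp only: Q2[OF wf SR])
  also have "cg (II E S) \<dots> (\<Sum>e\<in>?A. ge e * gg e)"
  proof (intro cg_sum cg_rmult)
    fix e assume "e \<in> ?A"
    then have e: "e \<in> edges E" by (simp add: out_edges_def)
    show "cg (II E S) (ge e * gv (rng E e)) (ge e)" by (rule rE1b[OF wf e])
    show "ok (gens E) (gg e)" using e by auto
  qed
  also have "\<dots> = PR E v" by (simp add: PR_def)
  finally have 1: "cg (II E S) (evR (F1 c E S) (PR (ES_graph E S) (Inl v))) (PR E v)" .
  have 2: "cg (II E S) (qv E S (Inl v)) (PR E v)"
  proof (cases "v \<in> ?T")
    case True then show ?thesis by (simp add: qv_def)
  next
    case False
    then have "v \<in> S" using v by auto
    then show ?thesis using rCK2[OF wf, of v S] False by (simp add: qv_def)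
  qed
  have "cg (II E S) (qv E S (Inl v)) (evR (F1 c E S) (PR (ES_graph E S) (Inl v)))"
    by (rule cg_trans[OF 2 cg_sym[OF 1]])
  then show ?thesis by (simp add: ev_diff cg_def)
qed

lemma F1_rels: assumes "r \<in> CLR (ES_graph E S) (regular (ES_graph E S))"
  shows "evR (F1 c E S) r \<in> II E S"
proof -
  let ?G = "ES_graph E S"
  from assms consider
      (1) x y where "r = gv x * gv y - (if x = y then gv x else 0)" "x \<in> verts ?G" "y \<in> verts ?G"
    | (2) a where "r = gv (src ?G a) * ge a - ge a" "a \<in> edges ?G"
    | (3) a where "r = ge a * gv (rng ?G a) - ge a" "a \<in> edges ?G"
    | (4) a where "r = gv (rng ?G a) * gg a - gg a" "a \<in> edges ?G"
    | (5) a where "r = gg a * gv (src ?G a) - gg a" "a \<in> edges ?G"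
    | (6) a b where "r = gg a * ge b - (if a = b then gv (rng ?G a) else 0)" "a \<in> edges ?G" "b \<in> edges ?G"
    | (7) x where "r = gv x - PR ?G x" "x \<in> regular ?G"
    unfolding CLR_def by blast
  then show ?thesis
  proof cases
    case 1 then show ?thesis using R1 by simp
  next
    case 2 then show ?thesis using R2 by simp
  next
    case 3 then show ?thesis using R3 by simp
  next
    case 4 then show ?thesis using R4 by simp
  next
    case 5 then show ?thesis using R5 by simp
  next
    case 6 then show ?thesis using R6 by simp
  next
    case 7
    then obtain v where "x = Inl v" "v \<in> regular E" by (auto simp: regular_ES)
    then show ?thesis using 7 R7 by simp
  qed
qed

end



definition G2 :: "('v,'e) graph \<Rightarrow> 'v set \<Rightarrow> ('v,'e) gen \<Rightarrow> (('v + 'v,'e + 'e) gen,'k::field) rg" where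
  "G2 E S g = (case g of
      GV v \<Rightarrow> gv (Inl v) + (if v \<in> TT E S then gv (Inr v) else 0)
    | GE e \<Rightarrow> ge (Inl e) + (if rng E e \<in> TT E S then ge (Inr e) else 0)
    | GG e \<Rightarrow> gg (Inl e) + (if rng E e \<in> TT E S then gg (Inr e) else 0))"

lemma G2_simps:
  "G2 E S (GV v) = gv (Inl v) + (if v \<in> TT E S then gv (Inr v) else 0)"
  "G2 E S (GE e) = ge (Inl e) + (if rng E e \<in> TT E S then ge (Inr e) else 0)"
  "G2 E S (GG e) = gg (Inl e) + (if rng E e \<in> TT E S then gg (Inr e) else 0)"
  by (simp_all add: G2_def)

lemma prod2: "(x1 + (if P then x2 else 0)) * (y1 + (if Q then y2 else 0)) =
   x1 * y1 + (if Q then x1 * y2 else 0) + (if P then x2 * y1 else 0) + (if P \<and> Q then x2 * y2 else (0::'a::ring))"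
  by (simp add: distrib_left distrib_right add.assoc)

lemma cg_if': "(P \<Longrightarrow> cg (IR X R) x y) \<Longrightarrow> cg (IR X R) (if P then x else 0) (if P then y else 0)"
  by auto

context
  fixes E :: "('v,'e) graph" and S :: "'v set"
  assumes wf: "wf_graph E" and SR: "S \<subseteq> regular E"
begin

abbreviation "ES \<equiv> ES_graph E S"
abbreviation "JJ \<equiv> II ES (regular ES)"

lemma wfES: "wf_graph ES" by (rule wf_ES[OF wf])

lemma ok_G2: "g \<in> gens E \<Longrightarrow> ok (gens ES) (G2 E S g)"
  using wf_rng[OF wf] by (cases g) (auto simp: G2_simps intro!: ok_add)

lemma S1: assumes "v \<in> verts E" "w \<in> verts E"
  shows "cg JJ (G2 E S (GV v) * G2 E S (GV w)) (if v = w then G2 E S (GV v) else (0::(('v + 'v,'e + 'e) gen,'k::field) rg))"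
proof -
  have "cg JJ (G2 E S (GV v) * G2 E S (GV w))
      ((if (Inl v :: 'v + 'v) = Inl w then gv (Inl v) else 0)
      + (if w \<in> TT E S then (if Inl v = Inr w then gv (Inl v) else 0) else 0)
      + (if v \<in> TT E S then (if Inr v = Inl w then gv (Inr v) else 0) else 0)
      + (if v \<in> TT E S \<and> w \<in> TT E S then (if Inr v = (Inr w :: 'v + 'v) then gv (Inr v) else 0) else 0))"
    unfolding G2_simps prod2 by (intro cg_add cg_if' rV[OF wfES]) (use assms in auto)
  also have "\<dots> = (if v = w then G2 E S (GV v) else 0)"
    by (cases "v = w") (auto simp: G2_simps)
  finally show ?thesis .
qed

lemma S2: assumes "e \<in> edges E"
  shows "cg JJ (G2 E S (GV (src E e)) * G2 E S (GE e)) (G2 E S (GE e) :: (('v + 'v,'e + 'e) gen,'k::field) rg)"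
proof -
  have s: "src E e \<in> verts E" by (rule wf_src[OF wf assms])
  have "cg JJ (G2 E S (GV (src E e)) * G2 E S (GE e))
      ((if Inl (src E e) = src ES (Inl e) then ge (Inl e) else 0)
      + (if rng E e \<in> TT E S then (if Inl (src E e) = src ES (Inr e) then ge (Inr e) else 0) else 0)
      + (if src E e \<in> TT E S then (if Inr (src E e) = src ES (Inl e) then ge (Inl e) else 0) else 0)
      + (if src E e \<in> TT E S \<and> rng E e \<in> TT E S then (if Inr (src E e) = src ES (Inr e) then ge (Inr e) else 0) else 0))"
    unfolding G2_simps prod2 by (intro cg_add cg_if' d_vE[OF wfES]) (use assms s in auto)
  also have "\<dots> = G2 E S (GE e)"
    by (simp add: G2_simps)
  finally show ?thesis .
qed

lemma S3: assumes "e \<in> edges E"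
  shows "cg JJ (G2 E S (GE e) * G2 E S (GV (rng E e))) (G2 E S (GE e) :: (('v + 'v,'e + 'e) gen,'k::field) rg)"
proof -
  have s: "rng E e \<in> verts E" by (rule wf_rng[OF wf assms])
  have "cg JJ (G2 E S (GE e) * G2 E S (GV (rng E e)))
      ((if rng ES (Inl e) = Inl (rng E e) then ge (Inl e) else 0)
      + (if rng E e \<in> TT E S then (if rng ES (Inl e) = Inr (rng E e) then ge (Inl e) else 0) else 0)
      + (if rng E e \<in> TT E S then (if rng ES (Inr e) = Inl (rng E e) then ge (Inr e) else 0) else 0)
      + (if rng E e \<in> TT E S \<and> rng E e \<in> TT E S then (if rng ES (Inr e) = Inr (rng E e) then ge (Inr e) else 0) else 0))"
    unfolding G2_simps prod2 by (intro cg_add cg_if' d_Ev[OF wfES]) (use assms s in auto)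
  also have "\<dots> = G2 E S (GE e)"
    by (simp add: G2_simps)
  finally show ?thesis .
qed

lemma S4: assumes "e \<in> edges E"
  shows "cg JJ (G2 E S (GV (rng E e)) * G2 E S (GG e)) (G2 E S (GG e) :: (('v + 'v,'e + 'e) gen,'k::field) rg)"
proof -
  have s: "rng E e \<in> verts E" by (rule wf_rng[OF wf assms])
  have "cg JJ (G2 E S (GV (rng E e)) * G2 E S (GG e))
      ((if Inl (rng E e) = rng ES (Inl e) then gg (Inl e) else 0)
      + (if rng E e \<in> TT E S then (if Inl (rng E e) = rng ES (Inr e) then gg (Inr e) else 0) else 0)
      + (if rng E e \<in> TT E S then (if Inr (rng E e) = rng ES (Inl e) then gg (Inl e) else 0) else 0)
      + (if rng E e \<in> TT E S \<and> rng E e \<in> TT E S then (if Inr (rng E e) = rng ES (Inr e) then gg (Inr e) else 0) else 0))"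
    unfolding G2_simps prod2 by (intro cg_add cg_if' d_vG[OF wfES]) (use assms s in auto)
  also have "\<dots> = G2 E S (GG e)"
    by (simp add: G2_simps)
  finally show ?thesis .
qed

lemma S5: assumes "e \<in> edges E"
  shows "cg JJ (G2 E S (GG e) * G2 E S (GV (src E e))) (G2 E S (GG e) :: (('v + 'v,'e + 'e) gen,'k::field) rg)"
proof -
  have s: "src E e \<in> verts E" by (rule wf_src[OF wf assms])
  have "cg JJ (G2 E S (GG e) * G2 E S (GV (src E e)))
      ((if src ES (Inl e) = Inl (src E e) then gg (Inl e) else 0)
      + (if src E e \<in> TT E S then (if src ES (Inl e) = Inr (src E e) then gg (Inl e) else 0) else 0)
      + (if rng E e \<in> TT E S then (if src ES (Inr e) = Inl (src E e) then gg (Inr e) else 0) else 0)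
      + (if rng E e \<in> TT E S \<and> src E e \<in> TT E S then (if src ES (Inr e) = Inr (src E e) then gg (Inr e) else 0) else 0))"
    unfolding G2_simps prod2 by (intro cg_add cg_if' d_Gv[OF wfES]) (use assms s in auto)
  also have "\<dots> = G2 E S (GG e)"
    by (simp add: G2_simps)
  finally show ?thesis .
qed

lemma S6: assumes "e \<in> edges E" "f \<in> edges E"
  shows "cg JJ (G2 E S (GG e) * G2 E S (GE f)) (if e = f then G2 E S (GV (rng E e)) else (0::(('v + 'v,'e + 'e) gen,'k::field) rg))"
proof -
  have "cg JJ (G2 E S (GG e) * G2 E S (GE f))
      ((if (Inl e :: 'e + 'e) = Inl f then gv (rng ES (Inl e)) else 0)
      + (if rng E f \<in> TT E S then (if Inl e = Inr f then gv (rng ES (Inl e)) else 0) else 0)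
      + (if rng E e \<in> TT E S then (if Inr e = Inl f then gv (rng ES (Inr e)) else 0) else 0)
      + (if rng E e \<in> TT E S \<and> rng E f \<in> TT E S then (if Inr e = (Inr f :: 'e + 'e) then gv (rng ES (Inr e)) else 0) else 0))"
    unfolding G2_simps prod2 by (intro cg_add cg_if' rCK1[OF wfES]) (use assms in auto)
  also have "\<dots> = (if e = f then G2 E S (GV (rng E e)) else 0)"
    by (cases "e = f") (auto simp: G2_simps)
  finally show ?thesis .
qed

lemma ge_gg_rng: assumes "a \<in> edges ES" "b \<in> edges ES" "rng ES a \<noteq> rng ES b"
  shows "cg JJ (ge a * gg b) (0::(('v + 'v,'e + 'e) gen,'k::field) rg)"
proof -
  have "cg JJ (ge a * gg b) ((ge a * gv (rng ES a)) * gg b)"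
    by (rule cg_rmult[OF cg_sym[OF rE1b[OF wfES assms(1)]]]) (use assms in auto)
  also have "(ge a * gv (rng ES a)) * gg b = ge a * (gv (rng ES a) * gg b)" by (simp add: mult.assoc)
  also have "cg JJ \<dots> (ge a * (if rng ES a = rng ES b then gg b else 0))"
    by (rule cg_lmult[OF d_vG[OF wfES]]) (use assms wf_rng[OF wfES] in auto)
  finally show ?thesis using assms by simp
qed

lemma K: assumes "v \<in> verts E"
  shows "cg JJ (\<Sum>e\<in>out_edges E v. G2 E S (GE e) * G2 E S (GG e))
    (PR ES (Inl v) :: (('v + 'v,'e + 'e) gen,'k::field) rg)"
proof (cases "finite (out_edges E v)")
  case False
  then have "infinite (out_edges ES (Inl v))"
    unfolding out_ES_Inl using finite_imageD[of Inl "out_edges E v"] by (auto simp: inj_on_def)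
  then show ?thesis using False by (simp add: PR_def)
next
  case fin: True
  let ?T = "TT E S"
  let ?A = "out_edges E v"
  let ?B = "{e \<in> out_edges E v. rng E e \<in> ?T}"
  have "cg JJ (\<Sum>e\<in>?A. G2 E S (GE e) * G2 E S (GG e))
     (\<Sum>e\<in>?A. ge (Inl e) * gg (Inl e) + (if rng E e \<in> ?T then 0 else 0) + (if rng E e \<in> ?T then 0 else 0)
       + (if rng E e \<in> ?T \<and> rng E e \<in> ?T then ge (Inr e) * gg (Inr e) else 0))"
  proof (intro cg_sum)
    fix e assume "e \<in> ?A"
    then have e: "e \<in> edges E" by (simp add: out_edges_def)
    show "cg JJ (G2 E S (GE e) * G2 E S (GG e)) (ge (Inl e) * gg (Inl e) + (if rng E e \<in> ?T then 0 else 0) + (if rng E e \<in> ?T then 0 else 0)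
       + (if rng E e \<in> ?T \<and> rng E e \<in> ?T then ge (Inr e) * gg (Inr e) else 0))"
      unfolding G2_simps prod2 by (intro cg_add cg_if' cg_refl ge_gg_rng) (use e in auto)
  qed
  also have "\<dots> = (\<Sum>e\<in>?A. ge (Inl e) * gg (Inl e)) + (\<Sum>e\<in>?A. if rng E e \<in> ?T then ge (Inr e) * gg (Inr e) else 0)"
    by (simp add: sum.distrib)
  also have "(\<Sum>e\<in>?A. if rng E e \<in> ?T then ge (Inr e) * gg (Inr e) else 0) = (\<Sum>e\<in>?B. ge (Inr e) * gg (Inr e))"
    by (rule sum.inter_filter[OF fin, symmetric])
  also have "(\<Sum>e\<in>?A. ge (Inl e) * gg (Inl e)) + (\<Sum>e\<in>?B. ge (Inr e) * gg (Inr e)) =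
      (\<Sum>a\<in>Inl ` ?A. ge a * gg a) + (\<Sum>a\<in>Inr ` ?B. ge a * gg a)"
    by (simp add: sum.reindex)
  also have "\<dots> = (\<Sum>a\<in>Inl ` ?A \<union> Inr ` ?B. ge a * gg a)"
    by (rule sum.union_disjoint[symmetric]) (use fin in auto)
  also have "\<dots> = PR ES (Inl v)"
    by (simp add: PR_def out_ES_Inl)
  finally show ?thesis .
qed

lemma S7: assumes "v \<in> S"
  shows "cg JJ (G2 E S (GV v)) (\<Sum>e\<in>out_edges E v. G2 E S (GE e) * G2 E S (GG e) :: (('v + 'v,'e + 'e) gen,'k::field) rg)"
proof -
  have v: "v \<in> regular E" "v \<in> verts E" using assms SR regular_verts[of E] by auto
  have "G2 E S (GV v) = gv (Inl v)" using assms by (simp add: G2_simps)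
  also have "cg JJ \<dots> (PR ES (Inl v))"
    by (rule rCK2[OF wfES]) (use v in \<open>simp add: regular_ES\<close>)
  also have "cg JJ \<dots> (\<Sum>e\<in>out_edges E v. G2 E S (GE e) * G2 E S (GG e))"
    by (rule cg_sym[OF K[OF v(2)]])
  finally show ?thesis .
qed

lemma G2_ev_PR: "evR (G2 E S) (PR E v) = (\<Sum>e\<in>out_edges E v. G2 E S (GE e) * G2 E S (GG e))"
  by (simp add: ev_PR)

lemma G2_rels: assumes "r \<in> CLR E S"
  shows "evR (G2 E S) r \<in> JJ"
proof -
  from assms consider
      (1) v w where "r = gv v * gv w - (if v = w then gv v else 0)" "v \<in> verts E" "w \<in> verts E"
    | (2) e where "r = gv (src E e) * ge e - ge e" "e \<in> edges E"
    | (3) e where "r = ge e * gv (rng E e) - ge e" "e \<in> edges E"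
    | (4) e where "r = gv (rng E e) * gg e - gg e" "e \<in> edges E"
    | (5) e where "r = gg e * gv (src E e) - gg e" "e \<in> edges E"
    | (6) e f where "r = gg e * ge f - (if e = f then gv (rng E e) else 0)" "e \<in> edges E" "f \<in> edges E"
    | (7) v where "r = gv v - PR E v" "v \<in> S"
    unfolding CLR_def by blast
  then show ?thesis
  proof cases
    case 1 then show ?thesis using S1[of v w] by (cases "v = w") (simp_all add: ev_diff ev_mult cg_def)
  next
    case 2 then show ?thesis using S2 by (simp add: ev_diff ev_mult cg_def)
  next
    case 3 then show ?thesis using S3 by (simp add: ev_diff ev_mult cg_def)
  next
    case 4 then show ?thesis using S4 by (simp add: ev_diff ev_mult cg_def)
  next
    case 5 then show ?thesis using S5 by (simp add: ev_diff ev_mult cg_def)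
  next
    case 6 then show ?thesis using S6[of e f] by (cases "e = f") (simp_all add: ev_diff ev_mult cg_def)
  next
    case 7 then show ?thesis using S7 by (simp add: ev_diff G2_ev_PR cg_def)
  qed
qed

end



lemma ok_nil: "ok X x \<Longrightarrow> [] \<notin> ks x"
  by (auto simp: ok_def)

lemma cg_lk: "cg (IR X R) x y \<Longrightarrow> fa_diff (lk x) (lk y) \<in> lk ` IR X R"
  by (simp add: cg_def fa_diff_lk)

lemma lk_cg: "fa_diff (lk x) (lk y) \<in> lk ` IR X R \<Longrightarrow> cg (IR X R) x y"
  by (simp add: cg_def fa_diff_lk lk_in_image_iff)

context
  fixes E :: "('v,'e) graph" and S :: "'v set" and c :: "'k::field \<Rightarrow> 'k"
  assumes wf: "wf_graph E" and SR: "S \<subseteq> regular E" and c: "invol c"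
begin

lemma ok_F1: "g \<in> gens (ES_graph E S) \<Longrightarrow> ok (gens E) (F1 c E S g)"
proof (cases g)
  case (GV x)
  assume "g \<in> gens (ES_graph E S)"
  then show ?thesis using GV ok_qvx[OF wf SR c] by simp
next
  case (GE a)
  assume "g \<in> gens (ES_graph E S)"
  then have "a \<in> edges (ES_graph E S)" using GE by simp
  then show ?thesis using GE ok_qvr[OF wf SR c] ed_edges by (auto simp: F1e_eq intro!: ok_mult)
next
  case (GG a)
  assume "g \<in> gens (ES_graph E S)"
  then have "a \<in> edges (ES_graph E S)" using GG by simp
  then show ?thesis using GG ok_qvr[OF wf SR c] ed_edges F1GG_eq[OF wf SR c, of a]
    by (auto intro!: ok_mult)
qed

lemma compA: assumes "g \<in> gens E"
  shows "cg (II E S) (evR (F1 c E S) (G2 E S g)) (sg [g] 1)"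
proof (cases g)
  case (GV v)
  have "evR (F1 c E S) (G2 E S g) = qv E S (Inl v) + (if v \<in> TT E S then qv E S (Inr v) else 0)"
    using GV by (simp add: G2_simps ev_add ev_if0)
  also have "\<dots> = gv v" by (rule Q2[OF wf SR])
  finally show ?thesis using GV by (simp add: gv_def)
next
  case (GE e)
  then have e: "e \<in> edges E" using assms by simp
  have "evR (F1 c E S) (G2 E S g) = ge e * (qv E S (Inl (rng E e)) + (if rng E e \<in> TT E S then qv E S (Inr (rng E e)) else 0))"
    using GE by (simp add: G2_simps ev_add ev_if0 F1e_def distrib_left)
  also have "\<dots> = ge e * gv (rng E e)" by (simp only: Q2[OF wf SR])
  also have "cg (II E S) \<dots> (ge e)" by (rule rE1b[OF wf e])
  finally show ?thesis using GE by (simp add: ge_def)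
next
  case (GG e)
  then have e: "e \<in> edges E" using assms by simp
  have "evR (F1 c E S) (G2 E S g) = (qv E S (Inl (rng E e)) + (if rng E e \<in> TT E S then qv E S (Inr (rng E e)) else 0)) * gg e"
    using GG by (simp add: G2_simps ev_add ev_if0 F1_GG[OF c] distrib_right del: F1_simps)
  also have "\<dots> = gv (rng E e) * gg e" by (simp only: Q2[OF wf SR])
  also have "cg (II E S) \<dots> (gg e)" by (rule rE2a[OF wf e])
  finally show ?thesis using GG by (simp add: gg_def)
qed

lemma K2: assumes "y \<in> verts (ES_graph E S)"
  shows "cg (JJ E S) (evR (G2 E S) (qv E S y)) (gv y)"
proof (cases y)
  case (Inl v)
  then have v: "v \<in> verts E" using assms by auto
  show ?thesis
  proof (cases "v \<in> TT E S")
    case True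
    have "evR (G2 E S) (qv E S y) = (\<Sum>e\<in>out_edges E v. G2 E S (GE e) * G2 E S (GG e))"
      using Inl True by (simp add: qv_def ev_PR)
    also have "cg (JJ E S) \<dots> (PR (ES E S) (Inl v))" by (rule K[OF wf SR v])
    also have "cg (JJ E S) \<dots> (gv (Inl v))"
      by (rule cg_sym[OF rCK2[OF wfES[OF wf SR]]]) (use True in \<open>simp add: regular_ES\<close>)
    finally show ?thesis using Inl by simp
  next
    case False
    then show ?thesis using Inl by (intro cg_eq) (auto simp add: qv_def G2_simps)
  qed
next
  case (Inr v)
  then have v: "v \<in> TT E S" "v \<in> verts E" using assms regular_verts[of E] by auto
  have "evR (G2 E S) (qv E S y) = (gv (Inl v) + gv (Inr v)) - (\<Sum>e\<in>out_edges E v. G2 E S (GE e) * G2 E S (GG e))"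
    using Inr v by (simp add: qv_def ev_PR ev_diff G2_simps)
  also have "cg (JJ E S) \<dots> ((gv (Inl v) + gv (Inr v)) - gv (Inl v))"
  proof (rule cg_diff[OF cg_refl])
    have "cg (JJ E S) (\<Sum>e\<in>out_edges E v. G2 E S (GE e) * G2 E S (GG e)) (PR (ES E S) (Inl v))"
      by (rule K[OF wf SR v(2)])
    also have "cg (JJ E S) \<dots> (gv (Inl v))"
      by (rule cg_sym[OF rCK2[OF wfES[OF wf SR]]]) (use v in \<open>simp add: regular_ES\<close>)
    finally show "cg (JJ E S) (\<Sum>e\<in>out_edges E v. G2 E S (GE e) * G2 E S (GG e)) (gv (Inl v))" .
  qed
  also have "(gv (Inl v) + gv (Inr v)) - gv (Inl v) = gv y" using Inr by simp
  finally show ?thesis .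
qed

lemma compB: assumes "x \<in> gens (ES_graph E S)"
  shows "cg (JJ E S) (evR (G2 E S) (F1 c E S x)) (sg [x] 1)"
proof (cases x)
  case (GV y)
  then show ?thesis using K2 assms by (simp add: gv_def)
next
  case (GE a)
  then have a: "a \<in> edges (ES_graph E S)" using assms by simp
  let ?r = "rng (ES_graph E S) a"
  have r: "?r \<in> verts (ES_graph E S)" using rng_ES_verts[OF wf SR c a] .
  have "evR (G2 E S) (F1 c E S x) = G2 E S (GE (ed a)) * evR (G2 E S) (qv E S ?r)"
    using GE by (simp add: F1e_eq ev_mult)
  also have "cg (JJ E S) \<dots> (G2 E S (GE (ed a)) * gv ?r)"
    by (rule cg_lmult[OF K2[OF r] ok_G2[OF wf SR]]) (use ed_edges[OF a] in simp)
  also have "\<dots> = ge (Inl (ed a)) * gv ?r + (if rng E (ed a) \<in> TT E S then ge (Inr (ed a)) * gv ?r else 0)"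
    by (simp add: G2_simps distrib_right)
  also have "cg (JJ E S) \<dots> ((if rng (ES_graph E S) (Inl (ed a)) = ?r then ge (Inl (ed a)) else 0)
      + (if rng E (ed a) \<in> TT E S then (if rng (ES_graph E S) (Inr (ed a)) = ?r then ge (Inr (ed a)) else 0) else 0))"
    by (intro cg_add cg_if' d_Ev[OF wfES[OF wf SR]]) (use r ed_edges[OF a] in auto)
  also have "\<dots> = ge a" using a by (cases a) auto
  finally show ?thesis using GE by (simp add: ge_def)
next
  case (GG a)
  then have a: "a \<in> edges (ES_graph E S)" using assms by simp
  let ?r = "rng (ES_graph E S) a"
  have r: "?r \<in> verts (ES_graph E S)" using rng_ES_verts[OF wf SR c a] .
  have "evR (G2 E S) (F1 c E S x) = evR (G2 E S) (qv E S ?r) * G2 E S (GG (ed a))"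
    using GG F1GG_eq[OF wf SR c, of a] by (simp add: ev_mult del: F1_simps)
  also have "cg (JJ E S) \<dots> (gv ?r * G2 E S (GG (ed a)))"
    by (rule cg_rmult[OF K2[OF r] ok_G2[OF wf SR]]) (use ed_edges[OF a] in simp)
  also have "\<dots> = gv ?r * gg (Inl (ed a)) + (if rng E (ed a) \<in> TT E S then gv ?r * gg (Inr (ed a)) else 0)"
    by (simp add: G2_simps distrib_left)
  also have "cg (JJ E S) \<dots> ((if ?r = rng (ES_graph E S) (Inl (ed a)) then gg (Inl (ed a)) else 0)
      + (if rng E (ed a) \<in> TT E S then (if ?r = rng (ES_graph E S) (Inr (ed a)) then gg (Inr (ed a)) else 0) else 0))"
    by (intro cg_add cg_if' d_vG[OF wfES[OF wf SR]]) (use r ed_edges[OF a] in auto)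
  also have "\<dots> = gg a" using a by (cases a) auto
  finally show ?thesis using GG by (simp add: gg_def)
qed

end



lemma diff_same_in: "fa_diff (lk a) (lk a) \<in> lk ` IR X R"
  using cg_lk[OF cg_refl] .

lemma gstar_gens[simp]: "gstar g \<in> gens G \<longleftrightarrow> g \<in> gens G"
  by (cases g) auto

lemma ok_star: assumes "invol c" "ok (gens G) x" shows "ok (gens G) (starR c x)"
  unfolding ok_def
proof
  fix u assume "u \<in> ks (starR c x)"
  then have "c (lk x (rev (map gstar u))) \<noteq> 0" by (simp add: in_keys_iff lk_star[OF assms(1)])
  then have "rev (map gstar u) \<in> ks x" using invol_0[OF assms(1)] by (auto simp: in_keys_iff)
  then have "rev (map gstar u) \<noteq> [] \<and> set (rev (map gstar u)) \<subseteq> gens G" using assms(2) unfolding ok_def by blast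
  then have "u \<noteq> []" "\<forall>g\<in>set u. gstar g \<in> gens G" by auto
  then show "u \<noteq> [] \<and> set u \<subseteq> gens G" by auto
qed

context
  fixes E :: "('v,'e) graph" and S :: "'v set" and c :: "'k::field \<Rightarrow> 'k"
  assumes wf: "wf_graph E" and SR: "S \<subseteq> regular E" and c: "invol c"
begin

abbreviation "Phi \<equiv> fa_eval (\<lambda>g. lk (F1 c E S g))"

lemma Phi_lk: "ok (gens (ES_graph E S)) x \<Longrightarrow> Phi (lk x) = lk (evR (F1 c E S) x)"
  by (rule fa_eval_lk[OF ok_nil])

lemma ok_evF1: "ok (gens (ES_graph E S)) x \<Longrightarrow> ok (gens E) (evR (F1 c E S) x)"
  by (rule ok_ev) (auto intro: ok_F1[OF wf SR c])

lemma ok_evG2: "ok (gens E) x \<Longrightarrow> ok (gens (ES_graph E S)) (evR (G2 E S) x)"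
  by (rule ok_ev) (auto intro: ok_G2[OF wf SR])

lemma F1_IR: "x \<in> JJ E S \<Longrightarrow> evR (F1 c E S) x \<in> II E S"
  by (rule ev_IR[of _ _ _ "CLR (ES_graph E S) (regular (ES_graph E S))"])
     (auto intro: ok_F1[OF wf SR c] F1_rels[OF wf SR c])

lemma G2_IR: "y \<in> II E S \<Longrightarrow> evR (G2 E S) y \<in> JJ E S"
  by (rule ev_IR[of _ _ _ "CLR E S"]) (auto intro: ok_G2[OF wf SR] G2_rels[OF wf SR])

lemma part_hom: "hom_mod (gens (ES_graph E S)) (lk ` JJ E S) (gens E) (lk ` II E S) Phi"
  unfolding hom_mod_def
proof (intro conjI ballI allI impI)
  fix p :: "(('v+'v,'e+'e) gen, 'k) fa" assume "p \<in> fa_carrier (gens (ES_graph E S))"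
  then obtain x where x: "p = lk x" "ok (gens (ES_graph E S)) x" by (rule carrier_obtain)
  show "Phi p \<in> fa_carrier (gens E)"
    using x by (simp add: Phi_lk carrier_lk ok_evF1)
next
  fix p q :: "(('v+'v,'e+'e) gen, 'k) fa" assume "p \<in> fa_carrier (gens (ES_graph E S))" "q \<in> fa_carrier (gens (ES_graph E S))"
    and pq: "fa_diff p q \<in> lk ` JJ E S"
  obtain x where x: "p = lk x" "ok (gens (ES_graph E S)) x" using \<open>p \<in> _\<close> by (rule carrier_obtain)
  obtain y where y: "q = lk y" "ok (gens (ES_graph E S)) y" using \<open>q \<in> _\<close> by (rule carrier_obtain)
  have "x - y \<in> JJ E S" using pq x y by (simp add: fa_diff_lk lk_in_image_iff)
  then have "evR (F1 c E S) (x - y) \<in> II E S" by (rule F1_IR)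
  then show "fa_diff (Phi p) (Phi q) \<in> lk ` II E S"
    using x y by (simp add: Phi_lk fa_diff_lk ev_diff)
next
  fix p q :: "(('v+'v,'e+'e) gen, 'k) fa" assume "p \<in> fa_carrier (gens (ES_graph E S))" "q \<in> fa_carrier (gens (ES_graph E S))"
  obtain x where x: "p = lk x" "ok (gens (ES_graph E S)) x" using \<open>p \<in> _\<close> by (rule carrier_obtain)
  obtain y where y: "q = lk y" "ok (gens (ES_graph E S)) y" using \<open>q \<in> _\<close> by (rule carrier_obtain)
  have "Phi (fa_add p q) = fa_add (Phi p) (Phi q)"
    using x y by (simp add: fa_add_lk Phi_lk ok_add ev_add)
  then show "fa_diff (Phi (fa_add p q)) (fa_add (Phi p) (Phi q)) \<in> lk ` II E S"
    using x y by (simp add: Phi_lk fa_add_lk diff_same_in)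
next
  fix a and p :: "(('v+'v,'e+'e) gen, 'k) fa" assume "p \<in> fa_carrier (gens (ES_graph E S))"
  obtain x where x: "p = lk x" "ok (gens (ES_graph E S)) x" using \<open>p \<in> _\<close> by (rule carrier_obtain)
  show "fa_diff (Phi (fa_smul a p)) (fa_smul a (Phi p)) \<in> lk ` II E S"
    using x by (simp add: fa_smul_lk Phi_lk ok_sc ev_sc diff_same_in)
next
  fix p q :: "(('v+'v,'e+'e) gen, 'k) fa" assume "p \<in> fa_carrier (gens (ES_graph E S))" "q \<in> fa_carrier (gens (ES_graph E S))"
  obtain x where x: "p = lk x" "ok (gens (ES_graph E S)) x" using \<open>p \<in> _\<close> by (rule carrier_obtain)
  obtain y where y: "q = lk y" "ok (gens (ES_graph E S)) y" using \<open>q \<in> _\<close> by (rule carrier_obtain)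
  show "fa_diff (Phi (fa_mult p q)) (fa_mult (Phi p) (Phi q)) \<in> lk ` II E S"
    using x y by (simp add: fa_mult_lk Phi_lk ok_mult ev_mult diff_same_in)
qed

lemma part_gen: "x \<in> gens (ES_graph E S) \<Longrightarrow> fa_diff (Phi (ghat x)) (lk (F1 c E S x)) \<in> lk ` II E S"
  by (simp add: ghat_lk Phi_lk ok_sg diff_same_in)

lemma part_inj: assumes "p \<in> fa_carrier (gens (ES_graph E S))" "Phi p \<in> lk ` II E S"
  shows "p \<in> lk ` JJ E S"
proof -
  obtain x where x: "p = lk x" "ok (gens (ES_graph E S)) x" using assms(1) by (rule carrier_obtain)
  have "evR (F1 c E S) x \<in> II E S" using assms(2) x by (simp add: Phi_lk lk_in_image_iff)
  then have w: "evR (G2 E S) (evR (F1 c E S) x) \<in> JJ E S" by (rule G2_IR)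
  have "cg (JJ E S) (evR (\<lambda>g. evR (G2 E S) (F1 c E S g)) x) (evR (\<lambda>g. sg [g] 1) x)"
    by (rule ev_cong[OF x(2)]) (auto intro: compB[OF wf SR c] ok_evG2 ok_F1[OF wf SR c] ok_sg)
  then have "cg (JJ E S) (evR (G2 E S) (evR (F1 c E S) x)) x" by (simp add: ev_comp ev_id)
  then have d: "evR (G2 E S) (evR (F1 c E S) x) - x \<in> JJ E S" by (simp add: cg_def)
  have "evR (G2 E S) (evR (F1 c E S) x) - (evR (G2 E S) (evR (F1 c E S) x) - x) \<in> JJ E S"
    by (rule IR_diff[OF w d])
  then have "x \<in> JJ E S" by simp
  then show ?thesis using x by simp
qed

lemma part_surj: assumes "q \<in> fa_carrier (gens E)"
  shows "\<exists>p\<in>fa_carrier (gens (ES_graph E S)). fa_diff (Phi p) q \<in> lk ` II E S"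
proof -
  obtain y where y: "q = lk y" "ok (gens E) y" using assms by (rule carrier_obtain)
  have ok: "ok (gens (ES_graph E S)) (evR (G2 E S) y)" by (rule ok_evG2[OF y(2)])
  have "cg (II E S) (evR (\<lambda>g. evR (F1 c E S) (G2 E S g)) y) (evR (\<lambda>g. sg [g] 1) y)"
    by (rule ev_cong[OF y(2)]) (auto intro: compA[OF wf SR c] ok_evF1 ok_G2[OF wf SR] ok_sg)
  then have "cg (II E S) (evR (F1 c E S) (evR (G2 E S) y)) y" by (simp add: ev_comp ev_id)
  then have "fa_diff (Phi (lk (evR (G2 E S) y))) q \<in> lk ` II E S"
    using y ok by (simp add: Phi_lk cg_lk)
  moreover have "lk (evR (G2 E S) y) \<in> fa_carrier (gens (ES_graph E S))" using ok by (simp add: carrier_lk)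
  ultimately show ?thesis by blast
qed

lemma part_star: assumes "p \<in> fa_carrier (gens (ES_graph E S))"
  shows "fa_diff (Phi (fa_star c p)) (fa_star c (Phi p)) \<in> lk ` II E S"
proof -
  obtain x where x: "p = lk x" "ok (gens (ES_graph E S)) x" using assms by (rule carrier_obtain)
  have A: "Phi (fa_star c p) = lk (starR c (evR (F1 c E S) x))"
    using x by (simp add: fa_star_lk invol_0[OF c] Phi_lk ok_star[OF c] ev_star[OF c] F1_star[OF c])
  have B: "fa_star c (Phi p) = lk (starR c (evR (F1 c E S) x))"
    using x by (simp add: fa_star_lk invol_0[OF c] Phi_lk)
  show ?thesis unfolding A B by (rule diff_same_in)
qed

lemma part_uniq: assumes hom: "hom_mod (gens (ES_graph E S)) (lk ` JJ E S) (gens E) (lk ` II E S) \<Psi>"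
  and gen: "\<forall>x\<in>gens (ES_graph E S). fa_diff (\<Psi> (ghat x)) (lk (F1 c E S x)) \<in> lk ` II E S"
  and p: "p \<in> fa_carrier (gens (ES_graph E S))"
  shows "fa_diff (\<Psi> p) (Phi p) \<in> lk ` II E S"
proof -
  let ?X = "gens (ES_graph E S)"
  define \<psi> where "\<psi> x = Abs_poly_mapping (\<Psi> (lk x))" for x :: "(('v + 'v, 'e + 'e) gen, 'k) rg"
  have car: "\<Psi> (lk x) \<in> fa_carrier (gens E)" if "ok ?X x" for x
    using hom that by (simp add: hom_mod_def carrier_lk)
  have lkpsi: "lk (\<psi> x) = \<Psi> (lk x)" if "ok ?X x" for x
  proof -
    have "fs (\<Psi> (lk x))" using car[OF that] by (simp add: fa_carrier_def fs_def)
    then show ?thesis unfolding \<psi>_def by (simp add: fs_def)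
  qed
  have okpsi: "ok (gens E) (\<psi> x)" if "ok ?X x" for x
    using car[OF that] lkpsi[OF that] by (metis carrier_lk)
  have padd: "cg (II E S) (\<psi> (x + y)) (\<psi> x + \<psi> y)" if "ok ?X x" "ok ?X y" for x y
  proof (rule lk_cg)
    have "fa_diff (\<Psi> (fa_add (lk x) (lk y))) (fa_add (\<Psi> (lk x)) (\<Psi> (lk y))) \<in> lk ` II E S"
      using hom that by (simp add: hom_mod_def carrier_lk)
    then show "fa_diff (lk (\<psi> (x + y))) (lk (\<psi> x + \<psi> y)) \<in> lk ` II E S"
      using that by (simp add: fa_add_lk lkpsi[symmetric] ok_add)
  qed
  have psc: "cg (II E S) (\<psi> (sc a * x)) (sc a * \<psi> x)" if "ok ?X x" for a x
  proof (rule lk_cg)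
    have "fa_diff (\<Psi> (fa_smul a (lk x))) (fa_smul a (\<Psi> (lk x))) \<in> lk ` II E S"
      using hom that by (simp add: hom_mod_def carrier_lk)
    then show "fa_diff (lk (\<psi> (sc a * x))) (lk (sc a * \<psi> x)) \<in> lk ` II E S"
      using that by (simp add: fa_smul_lk lkpsi[symmetric] ok_sc)
  qed
  have pmult: "cg (II E S) (\<psi> (x * y)) (\<psi> x * \<psi> y)" if "ok ?X x" "ok ?X y" for x y
  proof (rule lk_cg)
    have "fa_diff (\<Psi> (fa_mult (lk x) (lk y))) (fa_mult (\<Psi> (lk x)) (\<Psi> (lk y))) \<in> lk ` II E S"
      using hom that by (simp add: hom_mod_def carrier_lk)
    then show "fa_diff (lk (\<psi> (x * y))) (lk (\<psi> x * \<psi> y)) \<in> lk ` II E S"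
      using that by (simp add: fa_mult_lk lkpsi[symmetric] ok_mult)
  qed
  have pgen: "cg (II E S) (\<psi> (sg [g] 1)) (F1 c E S g)" if "g \<in> ?X" for g
  proof (rule lk_cg)
    show "fa_diff (lk (\<psi> (sg [g] 1))) (lk (F1 c E S g)) \<in> lk ` II E S"
      using gen that by (simp add: lkpsi[symmetric] ok_sg ghat_lk)
  qed
  have pword: "cg (II E S) (\<psi> (sg u 1)) (prod_list (map (F1 c E S) u))" if "u \<noteq> []" "set u \<subseteq> ?X" for u
    using that
  proof (induction u)
    case Nil then show ?case by simp
  next
    case (Cons g u)
    show ?case
    proof (cases "u = []")
      case True then show ?thesis using Cons pgen by simp
    next
      case False
      have oku: "ok ?X (sg u 1)" using Cons False by (simp add: ok_def)
      have "sg (g # u) 1 = sg [g] 1 * sg u (1::'k)" by (simp add: mult_single)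
      then have "\<psi> (sg (g # u) 1) = \<psi> (sg [g] 1 * sg u 1)" by simp
      also have "cg (II E S) \<dots> (\<psi> (sg [g] 1) * \<psi> (sg u 1))"
        by (rule pmult) (use Cons oku in auto)
      also have "cg (II E S) \<dots> (F1 c E S g * prod_list (map (F1 c E S) u))"
        by (rule cg_mult[OF pgen Cons.IH]) (use Cons False oku in \<open>auto intro: ok_F1[OF wf SR c] okpsi\<close>)
      finally show ?thesis by simp
    qed
  qed
  have psum: "cg (II E S) (\<psi> (sum f A)) (\<Sum>u\<in>A. \<psi> (f u))" if "finite A" "\<And>u. u \<in> A \<Longrightarrow> ok ?X (f u)" for f A
    using that
  proof (induction A rule: finite_induct)
    case empty
    have "cg (II E S) (\<psi> (sc 0 * 0)) (sc 0 * \<psi> 0)" by (rule psc) simp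
    then show ?case by simp
  next
    case (insert a A)
    have "\<psi> (sum f (insert a A)) = \<psi> (f a + sum f A)" using insert by simp
    also have "cg (II E S) \<dots> (\<psi> (f a) + \<psi> (sum f A))"
      by (rule padd) (use insert in \<open>auto intro: ok_sum\<close>)
    also have "cg (II E S) \<dots> (\<psi> (f a) + (\<Sum>u\<in>A. \<psi> (f u)))"
      by (rule cg_add[OF cg_refl insert.IH]) (use insert in auto)
    also have "\<dots> = (\<Sum>u\<in>insert a A. \<psi> (f u))" using insert by simp
    finally show ?case .
  qed
  obtain x where x: "p = lk x" "ok ?X x" using p by (rule carrier_obtain)
  have e: "(\<Sum>u\<in>ks x. sc (lk x u) * sg u 1) = x"
    using mono_exp[of x, symmetric] by (simp add: sc_mult_sg)
  have okm: "ok ?X (sc (lk x u) * sg u 1)" if "u \<in> ks x" for u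
  proof (rule ok_sc)
    show "ok ?X (sg u 1)" using x(2) that by (simp add: ok_def)
  qed
  have "\<psi> x = \<psi> (\<Sum>u\<in>ks x. sc (lk x u) * sg u 1)" by (simp only: e)
  also have "cg (II E S) \<dots> (\<Sum>u\<in>ks x. \<psi> (sc (lk x u) * sg u 1))"
    by (rule psum) (auto intro: okm)
  also have "cg (II E S) \<dots> (\<Sum>u\<in>ks x. sc (lk x u) * prod_list (map (F1 c E S) u))"
  proof (rule cg_sum)
    fix u assume u: "u \<in> ks x"
    have oku: "ok ?X (sg u (1::'k))" using x(2) u by (simp add: ok_def)
    have "cg (II E S) (\<psi> (sc (lk x u) * sg u 1)) (sc (lk x u) * \<psi> (sg u 1))"
      by (rule psc[OF oku])
    also have "cg (II E S) \<dots> (sc (lk x u) * prod_list (map (F1 c E S) u))"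
      by (rule cg_sc[OF pword]) (use x(2) u in \<open>auto simp: ok_def\<close>)
    finally show "cg (II E S) (\<psi> (sc (lk x u) * sg u 1)) (sc (lk x u) * prod_list (map (F1 c E S) u))" .
  qed
  also have "\<dots> = evR (F1 c E S) x" by (simp add: evR_def)
  finally have "cg (II E S) (\<psi> x) (evR (F1 c E S) x)" .
  then show ?thesis using x by (simp add: cg_lk lkpsi[symmetric] Phi_lk)
qed

end



theorem lemma4p8:
  fixes E :: "('v,'e) graph" and S :: "'v set" and cnj :: "'k::field \<Rightarrow> 'k"
  assumes wf: "wf_graph E"
    and S: "S \<subseteq> regular E"
    and cnj_add: "\<And>a b. cnj (a + b) = cnj a + cnj b"
    and cnj_mult: "\<And>a b. cnj (a * b) = cnj a * cnj b"
    and cnj_inv: "\<And>a. cnj (cnj a) = a"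
  defines "X1 \<equiv> gens (ES_graph E S)"
    and "I1 \<equiv> L_ideal (ES_graph E S)"
    and "X2 \<equiv> gens E"
    and "I2 \<equiv> CL_ideal E S"
    and "\<Phi> \<equiv> fa_eval (phi_gen cnj E S)"
  shows
    \<comment> \<open>existence: phi extends to a K-algebra homomorphism L_K(E_S) -> CL_K(E,S)\<close>
    "hom_mod X1 I1 X2 I2 \<Phi>
     \<and> (\<forall>x\<in>X1. fa_diff (\<Phi> (ghat x)) (phi_gen cnj E S x) \<in> I2)
     \<comment> \<open>injective\<close>
     \<and> (\<forall>p\<in>fa_carrier X1. \<Phi> p \<in> I2 \<longrightarrow> p \<in> I1)
     \<comment> \<open>surjective\<close>
     \<and> (\<forall>q\<in>fa_carrier X2. \<exists>p\<in>fa_carrier X1. fa_diff (\<Phi> p) q \<in> I2)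
     \<comment> \<open>star-preserving\<close>
     \<and> (\<forall>p\<in>fa_carrier X1. fa_diff (\<Phi> (fa_star cnj p)) (fa_star cnj (\<Phi> p)) \<in> I2)
     \<comment> \<open>uniqueness\<close>
     \<and> (\<forall>\<Psi>. hom_mod X1 I1 X2 I2 \<Psi>
            \<and> (\<forall>x\<in>X1. fa_diff (\<Psi> (ghat x)) (phi_gen cnj E S x) \<in> I2)
            \<longrightarrow> (\<forall>p\<in>fa_carrier X1. fa_diff (\<Psi> p) (\<Phi> p) \<in> I2))"
proof -
  have c: "invol cnj" unfolding invol_def using cnj_add cnj_mult cnj_inv by blast
  have phi: "phi_gen cnj E S = (\<lambda>g. lk (F1 cnj E S g))" by (rule phi_gen_lk[OF c])
  have PhiEq: "\<Phi> = fa_eval (\<lambda>g. lk (F1 cnj E S g))" unfolding \<Phi>_def phi ..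
  have I1eq: "I1 = lk ` JJ E S" unfolding I1_def L_ideal_def CL_ideal_lk ..
  have I2eq: "I2 = lk ` II E S" unfolding I2_def CL_ideal_lk ..
  note h = part_hom[OF wf S c] part_gen[OF wf S c] part_inj[OF wf S c] part_surj[OF wf S c]
    part_star[OF wf S c] part_uniq[OF wf S c]
  show ?thesis
    unfolding PhiEq I1eq I2eq X1_def X2_def phi
  proof (intro conjI ballI allI impI)
    show "hom_mod (gens (ES_graph E S)) (lk ` JJ E S) (gens E) (lk ` II E S) (fa_eval (\<lambda>g. lk (F1 cnj E S g)))"
      by (rule h(1))
  next
    fix x assume "x \<in> gens (ES_graph E S)"
    then show "fa_diff (fa_eval (\<lambda>g. lk (F1 cnj E S g)) (ghat x)) (lk (F1 cnj E S x)) \<in> lk ` II E S"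
      by (rule h(2))
  next
    fix p :: "(('v+'v,'e+'e) gen, 'k) fa" assume "p \<in> fa_carrier (gens (ES_graph E S))" "fa_eval (\<lambda>g. lk (F1 cnj E S g)) p \<in> lk ` II E S"
    then show "p \<in> lk ` JJ E S" by (rule h(3))
  next
    fix q :: "(('v,'e) gen, 'k) fa" assume "q \<in> fa_carrier (gens E)"
    then show "\<exists>p\<in>fa_carrier (gens (ES_graph E S)). fa_diff (fa_eval (\<lambda>g. lk (F1 cnj E S g)) p) q \<in> lk ` II E S"
      by (rule h(4))
  next
    fix p :: "(('v+'v,'e+'e) gen, 'k) fa" assume "p \<in> fa_carrier (gens (ES_graph E S))"
    then show "fa_diff (fa_eval (\<lambda>g. lk (F1 cnj E S g)) (fa_star cnj p)) (fa_star cnj (fa_eval (\<lambda>g. lk (F1 cnj E S g)) p)) \<in> lk ` II E S"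
      by (rule h(5))
  next
    fix \<Psi> and p :: "(('v+'v,'e+'e) gen, 'k) fa"
    assume "hom_mod (gens (ES_graph E S)) (lk ` JJ E S) (gens E) (lk ` II E S) \<Psi> \<and>
      (\<forall>x\<in>gens (ES_graph E S). fa_diff (\<Psi> (ghat x)) (lk (F1 cnj E S x)) \<in> lk ` II E S)"
      "p \<in> fa_carrier (gens (ES_graph E S))"
    then show "fa_diff (\<Psi> p) (fa_eval (\<lambda>g. lk (F1 cnj E S g)) p) \<in> lk ` II E S"
      using h(6) by blast
  qed
qed


end
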